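(* Let $m\in\mathbb{N}$ and let $V(x)=\sum_{k\in\mathbb{Z}}\widehat{V}(2k)e^{i2k\pi x}$ be a 1-periodic complex-valued distribution belonging to $H_{+}^{-m}$. Then each of the operators $S_{\pm}(V)$ is well defined on the Hilbert space $L_{2}(0,1)$ as an $m$-sectorial operator, namely as the form-sum $S_{\pm}(V)=D_{\pm}^{2m}\dotplus V(x)$. Here $S_{\pm}(V)$ is the operator associated (via the first representation theorem) with the sesquilinear form $$t_{\pm}[u,v]:=\langle D_{\pm}^{2m}u,v\rangle_{\pm}+\langle V(x)u,v\rangle_{\pm},\qquad \mathrm{Dom}(t_{\pm})=H_{\pm}^{m},$$ and this form is densely defined, closed and sectorial on $L_2(0,1)$. Moreover $$\mathrm{Dom}(S_{\pm})=\{u\in H_{\pm}^{m}\mid D_{\pm}^{2m}u+V(x)u\in L_{2}(0,1)\},\qquad S_{\pm}(V)u=D_{\pm}^{2m}u+V(x)u,\quad u\in\mathrm{Dom}(S_{\pm}).$$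
   Context: For $s\in\mathbb{R}$, $H_{+}^{s}$ is the space of formal series $f=\sum_{k\in\mathbb{Z}}\widehat f(2k)e^{i2k\pi x}$ (1-periodic functions/distributions on $[0,1]$) with $\|f\|_{H_+^s}^2=\sum_k\langle 2k\rangle^{2s}|\widehat f(2k)|^2<\infty$, and $H_{-}^{s}$ is the space of formal series $f=\sum_{k}\widehat f(2k+1)e^{i(2k+1)\pi x}$ (1-semiperiodic, i.e. antiperiodic) with $\|f\|_{H_-^s}^2=\sum_k\langle 2k+1\rangle^{2s}|\widehat f(2k+1)|^2<\infty$, where $\langle k\rangle=1+|k|$; $H_\pm^0=L_2(0,1)$. $\langle\cdot,\cdot\rangle_{\pm}$ denotes the sesquilinear pairing between $H_\pm^{s}$ and $H_\pm^{-s}$ obtained by extending by continuity the $L_2(0,1)$ inner product $(f,g)=\int_0^1 f\overline g\,dx$. $D_{\pm}=-i\,d/dx$ with domain $H_\pm^1$, and $D_\pm^{2m}=|D_\pm|^{2m}$ (acting on Fourier coefficients as multiplication by $(n\pi)^{2m}$ on the mode $e^{in\pi x}$), with domain $H_\pm^{2m}$, extended to $H_\pm^{s}\to H_\pm^{s-2m}$. For $V\in H_+^{-m}$ and $u\in H_\pm^{m}$, $V(x)u$ denotes the formal product of Fourier series, $V(x)u=\sum_n\big(\sum_j\widehat V(n-j)\widehat u(j)\big)e^{in\pi x}$, which converges in $H_\pm^{-m}$. An operator $A$ on a Hilbert space is $m$-sectorial if its numerical range $\{(Au,u):u\in\mathrm{Dom}(A),\|u\|=1\}$ lies in a sector $\{\lambda:|\arg(\lambda-\gamma)|\le\theta\}$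 with $\gamma\in\mathbb{R}$, $0\le\theta<\pi/2$, and the exterior of this sector lies in the resolvent set of $A$. The form-sum $D_\pm^{2m}\dotplus V$ means the $m$-sectorial operator associated with the closed sectorial form $t_\pm$ in Kato's sense (i.e. $\mathrm{Dom}(S_\pm)\subseteq\mathrm{Dom}(t_\pm)$ and $t_\pm[u,v]=(S_\pm u,v)$ for $u\in\mathrm{Dom}(S_\pm)$, $v\in\mathrm{Dom}(t_\pm)$). *)

theory Defs
  imports "HOL-Analysis.Analysis"
begin

text \<open>Model: a 1-periodic (pos = True) resp. 1-semiperiodic (pos = False) function/distribution
  on [0,1] is represented by its Fourier coefficients c :: int => complex, where c n is the
  coefficient of exp(i n pi x). Periodic series only have even n, semiperiodic only odd n.
  Via the Fourier isomorphism (both families are orthonormal bases of L2(0,1)),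
  L2(0,1) is identified with the space hs pos 0.\<close>

definition wt :: "int \<Rightarrow> real" where
  "wt n = 1 + real_of_int \<bar>n\<bar>"

definition parity_ok :: "bool \<Rightarrow> (int \<Rightarrow> complex) \<Rightarrow> bool" where
  "parity_ok pos f \<longleftrightarrow> (\<forall>n. f n \<noteq> 0 \<longrightarrow> (even n \<longleftrightarrow> pos))"

definition hs :: "bool \<Rightarrow> real \<Rightarrow> (int \<Rightarrow> complex) set" where
  "hs pos s = {f. parity_ok pos f \<and>
      (\<lambda>n. wt n powr (2 * s) * (cmod (f n))\<^sup>2) summable_on UNIV}"

abbreviation L2 :: "bool \<Rightarrow> (int \<Rightarrow> complex) set" where
  "L2 pos \<equiv> hs pos 0"

definition pair :: "(int \<Rightarrow> complex) \<Rightarrow> (int \<Rightarrow> complex) \<Rightarrow> complex" where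
  "pair f g = (\<Sum>\<^sub>\<infinity>n. f n * cnj (g n))"

definition l2norm :: "(int \<Rightarrow> complex) \<Rightarrow> real" where
  "l2norm f = sqrt (\<Sum>\<^sub>\<infinity>n. (cmod (f n))\<^sup>2)"

definition Dpow :: "nat \<Rightarrow> (int \<Rightarrow> complex) \<Rightarrow> (int \<Rightarrow> complex)" where
  "Dpow m u = (\<lambda>n. complex_of_real ((real_of_int n * pi) ^ (2 * m)) * u n)"

definition mult :: "(int \<Rightarrow> complex) \<Rightarrow> (int \<Rightarrow> complex) \<Rightarrow> (int \<Rightarrow> complex)" where
  "mult V u = (\<lambda>n. \<Sum>\<^sub>\<infinity>j. V (n - j) * u j)"

definition Sexpr :: "nat \<Rightarrow> (int \<Rightarrow> complex) \<Rightarrow> (int \<Rightarrow> complex) \<Rightarrow> (int \<Rightarrow> complex)" where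
  "Sexpr m V u = (\<lambda>n. Dpow m u n + mult V u n)"

definition sector :: "real \<Rightarrow> real \<Rightarrow> complex set" where
  "sector \<gamma> \<theta> = {z. z = complex_of_real \<gamma> \<or> \<bar>Arg (z - complex_of_real \<gamma>)\<bar> \<le> \<theta>}"

definition densely_defined :: "bool \<Rightarrow> (int \<Rightarrow> complex) set \<Rightarrow> bool" where
  "densely_defined pos D \<longleftrightarrow> D \<subseteq> L2 pos \<and>
     (\<forall>f\<in>L2 pos. \<forall>\<epsilon>>0. \<exists>u\<in>D. l2norm (\<lambda>n. f n - u n) < \<epsilon>)"

definition sectorial_form :: "bool \<Rightarrow> (int \<Rightarrow> complex) set
    \<Rightarrow> ((int \<Rightarrow> complex) \<Rightarrow> (int \<Rightarrow> complex) \<Rightarrow> complex) \<Rightarrow> bool" where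
  "sectorial_form pos D t \<longleftrightarrow> D \<subseteq> L2 pos \<and>
     (\<exists>\<gamma> \<theta>. 0 \<le> \<theta> \<and> \<theta> < pi / 2 \<and>
        (\<forall>u\<in>D. l2norm u = 1 \<longrightarrow> t u u \<in> sector \<gamma> \<theta>))"

definition closed_form :: "bool \<Rightarrow> (int \<Rightarrow> complex) set
    \<Rightarrow> ((int \<Rightarrow> complex) \<Rightarrow> (int \<Rightarrow> complex) \<Rightarrow> complex) \<Rightarrow> bool" where
  "closed_form pos D t \<longleftrightarrow>
     (\<forall>X u. (\<forall>n. X n \<in> D) \<and> u \<in> L2 pos \<and> (\<lambda>n. l2norm (\<lambda>i. X n i - u i)) \<longlonglongrightarrow> 0 \<and>
        (\<forall>\<epsilon>>0. \<exists>N. \<forall>n\<ge>N. \<forall>k\<ge>N. cmod (t (\<lambda>i. X n i - X k i) (\<lambda>i. X n i - X k i)) < \<epsilon>)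
      \<longrightarrow> u \<in> D \<and> (\<lambda>n. t (\<lambda>i. X n i - u i) (\<lambda>i. X n i - u i)) \<longlonglongrightarrow> 0)"

definition assoc_op :: "bool \<Rightarrow> (int \<Rightarrow> complex) set
    \<Rightarrow> ((int \<Rightarrow> complex) \<Rightarrow> (int \<Rightarrow> complex) \<Rightarrow> complex)
    \<Rightarrow> (int \<Rightarrow> complex) set \<Rightarrow> ((int \<Rightarrow> complex) \<Rightarrow> (int \<Rightarrow> complex)) \<Rightarrow> bool" where
  "assoc_op pos D t Sdom S \<longleftrightarrow>
     Sdom = {u\<in>D. \<exists>w\<in>L2 pos. \<forall>v\<in>D. t u v = pair w v} \<and>
     (\<forall>u\<in>Sdom. S u \<in> L2 pos \<and> (\<forall>v\<in>D. t u v = pair (S u) v))"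

definition m_sectorial :: "bool \<Rightarrow> (int \<Rightarrow> complex) set
    \<Rightarrow> ((int \<Rightarrow> complex) \<Rightarrow> (int \<Rightarrow> complex)) \<Rightarrow> bool" where
  "m_sectorial pos Sdom S \<longleftrightarrow> Sdom \<subseteq> L2 pos \<and> (\<forall>u\<in>Sdom. S u \<in> L2 pos) \<and>
     (\<exists>\<gamma> \<theta>. 0 \<le> \<theta> \<and> \<theta> < pi / 2 \<and>
        (\<forall>u\<in>Sdom. l2norm u = 1 \<longrightarrow> pair (S u) u \<in> sector \<gamma> \<theta>) \<and>
        (\<forall>z. z \<notin> sector \<gamma> \<theta> \<longrightarrow>
           bij_betw (\<lambda>u. (\<lambda>n. S u n - z * u n)) Sdom (L2 pos) \<and>
           (\<exists>C. \<forall>u\<in>Sdom. l2norm u \<le> C * l2norm (\<lambda>n. S u n - z * u n))))"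

end

theory Submission
  imports Defs
begin


lemma bsum:
  fixes g :: "'a \<Rightarrow> real"
  assumes "\<And>n. 0 \<le> g n" "\<And>F. finite F \<Longrightarrow> sum g F \<le> B"
  shows "g summable_on UNIV" "infsum g UNIV \<le> B"
proof -
  show s: "g summable_on UNIV"
    by (rule nonneg_bdd_above_summable_on) (use assms in \<open>auto intro!: bdd_aboveI2\<close>)
  show "infsum g UNIV \<le> B"
    by (rule infsum_le_finite_sums[OF s]) (use assms in auto)
qed

lemma fsum_le:
  fixes g :: "'a \<Rightarrow> real"
  assumes "g summable_on UNIV" "\<And>n. 0 \<le> g n" "finite F"
  shows "sum g F \<le> infsum g UNIV"
  by (rule finite_sum_le_infsum) (use assms in auto)

lemma L2_le:
  fixes h :: "'a \<Rightarrow> real"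
  assumes "(\<lambda>n. (h n)^2) summable_on UNIV" "finite F"
  shows "L2_set h F \<le> sqrt (\<Sum>\<^sub>\<infinity>n. (h n)^2)"
  unfolding L2_set_def by (rule real_sqrt_le_mono, rule fsum_le) (use assms in auto)

lemma infsum_sq_nonneg: "0 \<le> (\<Sum>\<^sub>\<infinity>n. ((h n)::real)^2)"
  by (rule infsum_nonneg) auto

lemma mink:
  fixes h h1 h2 :: "'a \<Rightarrow> real"
  assumes s1: "(\<lambda>n. (h1 n)^2) summable_on UNIV" and s2: "(\<lambda>n. (h2 n)^2) summable_on UNIV"
    and le: "\<And>n. \<bar>h n\<bar> \<le> \<bar>h1 n\<bar> + \<bar>h2 n\<bar>"
  shows "(\<lambda>n. (h n)^2) summable_on UNIV"
    "sqrt (\<Sum>\<^sub>\<infinity>n. (h n)^2) \<le> sqrt (\<Sum>\<^sub>\<infinity>n. (h1 n)^2) + sqrt (\<Sum>\<^sub>\<infinity>n. (h2 n)^2)"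
proof -
  let ?B = "sqrt (\<Sum>\<^sub>\<infinity>n. (h1 n)^2) + sqrt (\<Sum>\<^sub>\<infinity>n. (h2 n)^2)"
  have fin: "sum (\<lambda>n. (h n)^2) F \<le> ?B^2" if "finite F" for F
  proof -
    have "L2_set h F = L2_set (\<lambda>n. \<bar>h n\<bar>) F" by (simp add: L2_set_def)
    also have "\<dots> \<le> L2_set (\<lambda>n. \<bar>h1 n\<bar> + \<bar>h2 n\<bar>) F"
      by (rule L2_set_mono) (use le in auto)
    also have "\<dots> \<le> L2_set (\<lambda>n. \<bar>h1 n\<bar>) F + L2_set (\<lambda>n. \<bar>h2 n\<bar>) F"
      by (rule L2_set_triangle_ineq)
    also have "\<dots> = L2_set h1 F + L2_set h2 F" by (simp add: L2_set_def)
    also have "\<dots> \<le> ?B" using L2_le[OF s1 that] L2_le[OF s2 that] by linarith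
    finally have "L2_set h F \<le> ?B" .
    hence "(L2_set h F)^2 \<le> ?B^2" by (rule power_mono) simp
    thus ?thesis by (simp add: L2_set_def sum_nonneg)
  qed
  show "(\<lambda>n. (h n)^2) summable_on UNIV" by (rule bsum(1)[OF _ fin]) auto
  have "(\<Sum>\<^sub>\<infinity>n. (h n)^2) \<le> ?B^2" by (rule bsum(2)[OF _ fin]) auto
  hence "sqrt (\<Sum>\<^sub>\<infinity>n. (h n)^2) \<le> sqrt (?B^2)" by (rule real_sqrt_le_mono)
  also have "\<dots> = ?B" using infsum_sq_nonneg[of h1] infsum_sq_nonneg[of h2] by simp
  finally show "sqrt (\<Sum>\<^sub>\<infinity>n. (h n)^2) \<le> ?B" .
qed

lemma cs:
  fixes h1 h2 :: "'a \<Rightarrow> real"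
  assumes s1: "(\<lambda>n. (h1 n)^2) summable_on UNIV" and s2: "(\<lambda>n. (h2 n)^2) summable_on UNIV"
  shows "(\<lambda>n. \<bar>h1 n\<bar> * \<bar>h2 n\<bar>) summable_on UNIV"
    "(\<Sum>\<^sub>\<infinity>n. \<bar>h1 n\<bar> * \<bar>h2 n\<bar>) \<le> sqrt (\<Sum>\<^sub>\<infinity>n. (h1 n)^2) * sqrt (\<Sum>\<^sub>\<infinity>n. (h2 n)^2)"
proof -
  let ?B = "sqrt (\<Sum>\<^sub>\<infinity>n. (h1 n)^2) * sqrt (\<Sum>\<^sub>\<infinity>n. (h2 n)^2)"
  have fin: "sum (\<lambda>n. \<bar>h1 n\<bar> * \<bar>h2 n\<bar>) F \<le> ?B" if "finite F" for F
  proof -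
    have "sum (\<lambda>n. \<bar>h1 n\<bar> * \<bar>h2 n\<bar>) F \<le> L2_set h1 F * L2_set h2 F" by (rule L2_set_mult_ineq)
    also have "\<dots> \<le> ?B" by (rule mult_mono) (use L2_le[OF s1 that] L2_le[OF s2 that] infsum_sq_nonneg[of h1] in auto)
    finally show ?thesis .
  qed
  show "(\<lambda>n. \<bar>h1 n\<bar> * \<bar>h2 n\<bar>) summable_on UNIV" by (rule bsum(1)[OF _ fin]) auto
  show "(\<Sum>\<^sub>\<infinity>n. \<bar>h1 n\<bar> * \<bar>h2 n\<bar>) \<le> ?B" by (rule bsum(2)[OF _ fin]) auto
qed

lemma sq_cmp:
  fixes h h1 :: "'a \<Rightarrow> real"
  assumes s1: "(\<lambda>n. (h1 n)^2) summable_on UNIV" and le: "\<And>n. \<bar>h n\<bar> \<le> c * \<bar>h1 n\<bar>"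
  shows "(\<lambda>n. (h n)^2) summable_on UNIV" "(\<Sum>\<^sub>\<infinity>n. (h n)^2) \<le> c^2 * (\<Sum>\<^sub>\<infinity>n. (h1 n)^2)"
proof -
  have le2: "(h n)^2 \<le> c^2 * (h1 n)^2" for n
  proof -
    have "\<bar>h n\<bar>^2 \<le> (c * \<bar>h1 n\<bar>)^2" by (rule power_mono[OF le]) simp
    thus ?thesis by (simp add: power_mult_distrib)
  qed
  have s: "(\<lambda>n. c^2 * (h1 n)^2) summable_on UNIV" using s1 by (rule summable_on_cmult_right)
  show "(\<lambda>n. (h n)^2) summable_on UNIV" by (rule summable_on_comparison_test[OF s]) (use le2 in auto)
  hence "(\<Sum>\<^sub>\<infinity>n. (h n)^2) \<le> (\<Sum>\<^sub>\<infinity>n. c^2 * (h1 n)^2)" by (rule infsum_mono[OF _ s]) (use le2 in auto)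
  thus "(\<Sum>\<^sub>\<infinity>n. (h n)^2) \<le> c^2 * (\<Sum>\<^sub>\<infinity>n. (h1 n)^2)" by (simp add: infsum_cmult_right')
qed


lemma L2_set_reindex:
  assumes "inj_on \<phi> J"
  shows "L2_set (\<lambda>j. f (\<phi> j)) J = L2_set f (\<phi> ` J)"
  unfolding L2_set_def using sum.reindex[OF assms, of "\<lambda>x. (f x)^2"] by simp

lemma L2_shift_le:
  fixes f :: "int \<Rightarrow> real"
  assumes "(\<lambda>n. (f n)^2) summable_on UNIV" "finite J"
  shows "L2_set (\<lambda>j. f (k + j)) J \<le> sqrt (\<Sum>\<^sub>\<infinity>n. (f n)^2)"
    "L2_set (\<lambda>j. f (k - j)) J \<le> sqrt (\<Sum>\<^sub>\<infinity>n. (f n)^2)"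
proof -
  have "L2_set (\<lambda>j. f (k + j)) J = L2_set f ((\<lambda>j. k + j) ` J)"
    by (rule L2_set_reindex) (auto simp: inj_on_def)
  thus "L2_set (\<lambda>j. f (k + j)) J \<le> sqrt (\<Sum>\<^sub>\<infinity>n. (f n)^2)" using L2_le[OF assms(1)] assms(2) by simp
  have "L2_set (\<lambda>j. f (k - j)) J = L2_set f ((\<lambda>j. k - j) ` J)"
    by (rule L2_set_reindex) (auto simp: inj_on_def)
  thus "L2_set (\<lambda>j. f (k - j)) J \<le> sqrt (\<Sum>\<^sub>\<infinity>n. (f n)^2)" using L2_le[OF assms(1)] assms(2) by simp
qed

lemma inner_bound:
  fixes X Y :: "int \<Rightarrow> real"
  assumes "\<And>n. 0 \<le> X n" "\<And>n. 0 \<le> Y n"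
    "(\<lambda>n. (X n)^2) summable_on UNIV" "(\<lambda>n. (Y n)^2) summable_on UNIV" "finite J"
  shows "(\<Sum>j\<in>J. X j * Y (k + j)) \<le> sqrt (\<Sum>\<^sub>\<infinity>n. (X n)^2) * sqrt (\<Sum>\<^sub>\<infinity>n. (Y n)^2)"
    "(\<Sum>j\<in>J. Y (k - j) * X j) \<le> sqrt (\<Sum>\<^sub>\<infinity>n. (Y n)^2) * sqrt (\<Sum>\<^sub>\<infinity>n. (X n)^2)"
proof -
  have "(\<Sum>j\<in>J. X j * Y (k + j)) = (\<Sum>j\<in>J. \<bar>X j\<bar> * \<bar>Y (k + j)\<bar>)" using assms(1,2) by simp
  also have "\<dots> \<le> L2_set X J * L2_set (\<lambda>j. Y (k + j)) J" by (rule L2_set_mult_ineq)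
  also have "\<dots> \<le> sqrt (\<Sum>\<^sub>\<infinity>n. (X n)^2) * sqrt (\<Sum>\<^sub>\<infinity>n. (Y n)^2)"
    by (rule mult_mono) (use L2_le[OF assms(3,5)] L2_shift_le[OF assms(4,5)] infsum_sq_nonneg[of X] infsum_sq_nonneg[of Y] in auto)
  finally show "(\<Sum>j\<in>J. X j * Y (k + j)) \<le> sqrt (\<Sum>\<^sub>\<infinity>n. (X n)^2) * sqrt (\<Sum>\<^sub>\<infinity>n. (Y n)^2)" .
  have "(\<Sum>j\<in>J. Y (k - j) * X j) = (\<Sum>j\<in>J. \<bar>Y (k - j)\<bar> * \<bar>X j\<bar>)" using assms(1,2) by simp
  also have "\<dots> \<le> L2_set (\<lambda>j. Y (k - j)) J * L2_set X J" by (rule L2_set_mult_ineq)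
  also have "\<dots> \<le> sqrt (\<Sum>\<^sub>\<infinity>n. (Y n)^2) * sqrt (\<Sum>\<^sub>\<infinity>n. (X n)^2)"
    by (rule mult_mono) (use L2_le[OF assms(3,5)] L2_shift_le[OF assms(4,5)] infsum_sq_nonneg[of X] infsum_sq_nonneg[of Y] in auto)
  finally show "(\<Sum>j\<in>J. Y (k - j) * X j) \<le> sqrt (\<Sum>\<^sub>\<infinity>n. (Y n)^2) * sqrt (\<Sum>\<^sub>\<infinity>n. (X n)^2)" .
qed

lemma convB:
  fixes w X Y :: "int \<Rightarrow> real"
  assumes "\<And>n. 0 \<le> w n" "\<And>n. 0 \<le> X n" "\<And>n. 0 \<le> Y n"
    "(\<lambda>n. (w n)^2) summable_on UNIV" "(\<lambda>n. (Y n)^2) summable_on UNIV" "finite K" "finite J"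
  shows "(\<Sum>k\<in>K. \<Sum>j\<in>J. w k * X j * Y (k + j))
     \<le> (\<Sum>j\<in>J. X j) * (sqrt (\<Sum>\<^sub>\<infinity>n. (w n)^2) * sqrt (\<Sum>\<^sub>\<infinity>n. (Y n)^2))"
proof -
  have "(\<Sum>k\<in>K. \<Sum>j\<in>J. w k * X j * Y (k + j)) = (\<Sum>j\<in>J. X j * (\<Sum>k\<in>K. w k * Y (j + k)))"
    by (subst sum.swap) (simp add: sum_distrib_left algebra_simps)
  also have "\<dots> \<le> (\<Sum>j\<in>J. X j * (sqrt (\<Sum>\<^sub>\<infinity>n. (w n)^2) * sqrt (\<Sum>\<^sub>\<infinity>n. (Y n)^2)))"
    by (rule sum_mono, rule mult_left_mono) (use inner_bound(1)[OF assms(1,3,4,5,6)] assms(2) in auto)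
  also have "\<dots> = (\<Sum>j\<in>J. X j) * (sqrt (\<Sum>\<^sub>\<infinity>n. (w n)^2) * sqrt (\<Sum>\<^sub>\<infinity>n. (Y n)^2))"
    by (simp add: sum_distrib_right)
  finally show ?thesis .
qed

lemma convA:
  fixes w X Y :: "int \<Rightarrow> real"
  assumes "\<And>n. 0 \<le> w n" "\<And>n. 0 \<le> X n" "\<And>n. 0 \<le> Y n"
    "(\<lambda>n. (w n)^2) summable_on UNIV" "(\<lambda>n. (X n)^2) summable_on UNIV" "finite K" "finite J"
  shows "(\<Sum>k\<in>K. \<Sum>j\<in>J. w k * X j * Y (k + j))
     \<le> (\<Sum>l\<in>(\<lambda>(k,j). k + j) ` (K \<times> J). Y l) * (sqrt (\<Sum>\<^sub>\<infinity>n. (w n)^2) * sqrt (\<Sum>\<^sub>\<infinity>n. (X n)^2))"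
proof -
  let ?L = "(\<lambda>(k,j). k + j) ` (K \<times> J)"
  let ?g = "\<lambda>(l::int, j::int). w (l - j) * X j * Y l"
  have "(\<Sum>k\<in>K. \<Sum>j\<in>J. w k * X j * Y (k + j)) = (\<Sum>(k,j)\<in>K \<times> J. w k * X j * Y (k + j))"
    by (simp add: sum.cartesian_product)
  also have "\<dots> = sum ?g ((\<lambda>(k,j). (k + j, j)) ` (K \<times> J))"
    by (subst sum.reindex) (auto simp: inj_on_def intro!: sum.cong)
  also have "\<dots> \<le> sum ?g (?L \<times> J)"
    by (rule sum_mono2) (use assms in \<open>auto intro!: mult_nonneg_nonneg\<close>)
  also have "\<dots> = (\<Sum>l\<in>?L. Y l * (\<Sum>j\<in>J. w (l - j) * X j))"
    by (simp add: sum.cartesian_product[symmetric] sum_distrib_left algebra_simps)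
  also have "\<dots> \<le> (\<Sum>l\<in>?L. Y l * (sqrt (\<Sum>\<^sub>\<infinity>n. (w n)^2) * sqrt (\<Sum>\<^sub>\<infinity>n. (X n)^2)))"
    by (rule sum_mono, rule mult_left_mono) (use inner_bound(2)[OF assms(2,1,5,4,7)] assms(3) in auto)
  also have "\<dots> = (\<Sum>l\<in>?L. Y l) * (sqrt (\<Sum>\<^sub>\<infinity>n. (w n)^2) * sqrt (\<Sum>\<^sub>\<infinity>n. (X n)^2))"
    by (simp add: sum_distrib_right)
  finally show ?thesis .
qed

lemma inv_sq_sum_aux: "(\<Sum>n\<in>{-int K..int K}. 1 / (1 + real_of_int \<bar>n\<bar>)^2) \<le> 3 - 2 / (real K + 1)"
proof (induction K)
  case 0
  then show ?case by simp
next
  case (Suc K)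
  have eq: "{-int (Suc K)..int (Suc K)} = insert (int K + 1) (insert (- int K - 1) {-int K..int K})"
    by auto
  have "(\<Sum>n\<in>{-int (Suc K)..int (Suc K)}. 1 / (1 + real_of_int \<bar>n\<bar>)^2)
      = 2 / (real K + 2)^2 + (\<Sum>n\<in>{-int K..int K}. 1 / (1 + real_of_int \<bar>n\<bar>)^2)"
    unfolding eq by (simp add: add.commute)
  also have "\<dots> \<le> 2 / (real K + 2)^2 + (3 - 2 / (real K + 1))" using Suc by simp
  also have "\<dots> \<le> 3 - 2 / (real (Suc K) + 1)"
  proof -
    have h2: "2 / (real K + 2)^2 \<le> 2 / (real K + 1) - 2 / (real K + 2)"
      by (simp add: divide_simps power2_eq_square)
    have e: "real (Suc K) + 1 = real K + 2" by simp
    show ?thesis by (simp only: e) (use h2 in linarith)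
  qed
  finally show ?case .
qed

lemma inv_sq_sum: 
  assumes "finite F"
  shows "(\<Sum>n\<in>F. 1 / (1 + real_of_int \<bar>n\<bar>)^2) \<le> 3"
proof -
  obtain K :: nat where K: "F \<subseteq> {-int K..int K}"
  proof -
    have "bdd_above (abs ` F)" using assms by simp
    then obtain B where "\<forall>n\<in>F. \<bar>n\<bar> \<le> B" by (auto simp: bdd_above_def)
    thus ?thesis using that[of "nat B"] by force
  qed
  have "(\<Sum>n\<in>F. 1 / (1 + real_of_int \<bar>n\<bar>)^2) \<le> (\<Sum>n\<in>{-int K..int K}. 1 / (1 + real_of_int \<bar>n\<bar>)^2)"
    by (rule sum_mono2) (use K in auto)
  also have "\<dots> \<le> 3" using inv_sq_sum_aux[of K] by (smt (verit) divide_nonneg_nonneg of_nat_0_le_iff)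
  finally show ?thesis .
qed


definition pw :: "nat \<Rightarrow> int \<Rightarrow> real" where
  "pw m n = (real_of_int n * pi) ^ (2 * m)"

definition Aterm :: "nat \<Rightarrow> real \<Rightarrow> (int \<Rightarrow> complex) \<Rightarrow> int \<Rightarrow> real" where
  "Aterm m lam u n = (pw m n + lam) * (cmod (u n))^2"

definition Anorm :: "nat \<Rightarrow> real \<Rightarrow> (int \<Rightarrow> complex) \<Rightarrow> real" where
  "Anorm m lam u = (\<Sum>\<^sub>\<infinity>n. Aterm m lam u n)"

lemma pw_nonneg: "0 \<le> pw m n"
  unfolding pw_def by (simp add: zero_le_even_power)

lemma wt_ge1: "1 \<le> wt n" unfolding wt_def by simp
lemma wt_pos: "0 < wt n" unfolding wt_def by simp

lemma wt_pow_le: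
  assumes "1 \<le> lam"
  shows "wt n ^ (2 * m) \<le> 4 ^ m * (pw m n + lam)"
proof -
  let ?x = "real_of_int \<bar>n\<bar>"
  have "wt n \<le> 2 * max 1 ?x" unfolding wt_def by simp
  hence "wt n ^ (2*m) \<le> (2 * max 1 ?x) ^ (2*m)" by (rule power_mono) (simp add: wt_def)
  also have "\<dots> = 4 ^ m * (max 1 ?x) ^ (2*m)" by (simp add: power_mult_distrib power_mult)
  also have "(max 1 ?x) ^ (2*m) \<le> 1 + ?x ^ (2*m)"
    by (cases "1 \<le> ?x") (auto simp: max_def)
  also have "?x ^ (2*m) \<le> pw m n"
  proof -
    have "?x ^ (2*m) \<le> (?x * pi) ^ (2*m)"
      by (rule power_mono) (use mult_left_mono[of 1 pi ?x] pi_ge_two in auto)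
    also have "\<dots> = pw m n" unfolding pw_def
      by (simp add: power_mult_distrib power_even_abs_numeral power_mult[symmetric]) (metis power_even_abs even_mult_iff even_numeral abs_of_nat power_mult_distrib)
    finally show ?thesis .
  qed
  finally have "wt n ^ (2 * m) \<le> 4 ^ m * (1 + pw m n)" by (simp add: mult_left_mono)
  also have "\<dots> \<le> 4 ^ m * (pw m n + lam)" using assms by (intro mult_left_mono) auto
  finally show ?thesis .
qed

lemma l1_bound:
  fixes X :: "int \<Rightarrow> real"
  assumes m: "1 \<le> m" and X: "\<And>n. 0 \<le> X n"
    and s: "(\<lambda>n. (wt n ^ m * X n)^2) summable_on UNIV" and F: "finite F"
  shows "(\<Sum>n\<in>F. X n) \<le> sqrt 3 * sqrt (\<Sum>\<^sub>\<infinity>n. (wt n ^ m * X n)^2)"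
proof -
  have "(\<Sum>n\<in>F. X n) = (\<Sum>n\<in>F. \<bar>1 / wt n ^ m\<bar> * \<bar>wt n ^ m * X n\<bar>)"
    using X wt_pos by (intro sum.cong) (auto simp: abs_mult dest: less_imp_neq[symmetric])
  also have "\<dots> \<le> L2_set (\<lambda>n. 1 / wt n ^ m) F * L2_set (\<lambda>n. wt n ^ m * X n) F"
    by (rule L2_set_mult_ineq)
  also have "\<dots> \<le> sqrt 3 * sqrt (\<Sum>\<^sub>\<infinity>n. (wt n ^ m * X n)^2)"
  proof (rule mult_mono)
    have "(\<Sum>n\<in>F. (1 / wt n ^ m)^2) \<le> (\<Sum>n\<in>F. 1 / (1 + real_of_int \<bar>n\<bar>)^2)"
    proof (rule sum_mono)
      fix n
      have "wt n ^ 1 \<le> wt n ^ m" using m wt_ge1 by (intro power_increasing) auto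
      hence h: "(1 + real_of_int \<bar>n\<bar>) ^ 2 \<le> (wt n ^ m)^2" by (intro power_mono) (auto simp: wt_def)
      have "1 / (wt n ^ m)^2 \<le> 1 / (1 + real_of_int \<bar>n\<bar>)^2"
        by (rule divide_left_mono[OF h]) (use wt_pos[of n] in \<open>auto simp: wt_def\<close>)
      thus "(1 / wt n ^ m)^2 \<le> 1 / (1 + real_of_int \<bar>n\<bar>)^2"
        by (simp add: power_one_over)
    qed
    also have "\<dots> \<le> 3" by (rule inv_sq_sum[OF F])
    finally show "L2_set (\<lambda>n. 1 / wt n ^ m) F \<le> sqrt 3" unfolding L2_set_def by simp
    show "L2_set (\<lambda>n. wt n ^ m * X n) F \<le> sqrt (\<Sum>\<^sub>\<infinity>n. (wt n ^ m * X n)^2)"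
      by (rule L2_le[OF s F])
  qed auto
  finally show ?thesis .
qed

lemma reidx:
  fixes f :: "int \<times> int \<Rightarrow> real"
  assumes "finite G" "\<And>x. 0 \<le> f x"
  shows "sum f G \<le> (\<Sum>k\<in>(\<lambda>(n,j). n - j) ` G. \<Sum>j\<in>snd ` G. f (k + j, j))"
proof -
  have "sum f G = sum (\<lambda>(k,j). f (k + j, j)) ((\<lambda>(n,j). (n - j, j)) ` G)"
    by (subst sum.reindex) (auto simp: inj_on_def intro!: sum.cong)
  also have "\<dots> \<le> sum (\<lambda>(k,j). f (k + j, j)) ((\<lambda>(n,j). n - j) ` G \<times> snd ` G)"
    by (rule sum_mono2) (use assms in \<open>force+\<close>)
  also have "\<dots> = (\<Sum>k\<in>(\<lambda>(n,j). n - j) ` G. \<Sum>j\<in>snd ` G. f (k + j, j))"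
    by (simp add: sum.cartesian_product)
  finally show ?thesis .
qed

lemma wt_split: "wt k ^ m \<le> 2 ^ m * (wt j ^ m + wt (k + j) ^ m)"
proof -
  have "wt k \<le> 2 * max (wt j) (wt (k + j))" unfolding wt_def by (simp add: max_def) (smt (verit, best) abs_triangle_ineq4 abs_minus_commute)
  hence "wt k ^ m \<le> (2 * max (wt j) (wt (k + j))) ^ m" by (rule power_mono) (simp add: wt_def)
  also have "\<dots> = 2 ^ m * max (wt j) (wt (k + j)) ^ m" by (simp add: power_mult_distrib)
  also have "max (wt j) (wt (k + j)) ^ m \<le> wt j ^ m + wt (k + j) ^ m"
    using wt_pos[of j] wt_pos[of "k+j"] by (auto simp: max_def)
  finally show ?thesis by (simp add: mult_left_mono)
qed

lemma Aterm_nonneg: "0 \<le> lam \<Longrightarrow> 0 \<le> Aterm m lam u n"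
  unfolding Aterm_def using pw_nonneg by simp

lemma Anorm_nonneg: "0 \<le> lam \<Longrightarrow> 0 \<le> Anorm m lam u"
  unfolding Anorm_def by (rule infsum_nonneg) (simp add: Aterm_nonneg)

lemma A_l2:
  assumes lam: "1 \<le> lam" and su: "Aterm m lam u summable_on UNIV"
  shows "(\<lambda>n. (cmod (u n))^2) summable_on UNIV" "(\<Sum>\<^sub>\<infinity>n. (cmod (u n))^2) \<le> Anorm m lam u / lam"
proof -
  have s: "(\<lambda>n. Aterm m lam u n / lam) summable_on UNIV" using summable_on_cmult_left[OF su, of "1/lam"] by simp
  have le: "(cmod (u n))^2 \<le> Aterm m lam u n / lam" for n
    using lam pw_nonneg[of m n] by (simp add: Aterm_def field_simps)
  show "(\<lambda>n. (cmod (u n))^2) summable_on UNIV"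
    by (rule summable_on_comparison_test[OF s]) (use le in auto)
  hence "(\<Sum>\<^sub>\<infinity>n. (cmod (u n))^2) \<le> (\<Sum>\<^sub>\<infinity>n. Aterm m lam u n / lam)"
    by (rule infsum_mono[OF _ s]) (use le in auto)
  also have "\<dots> = Anorm m lam u / lam" unfolding Anorm_def using infsum_cmult_left'[of "Aterm m lam u" "1/lam" UNIV] by simp
  finally show "(\<Sum>\<^sub>\<infinity>n. (cmod (u n))^2) \<le> Anorm m lam u / lam" .
qed

lemma A_hm:
  assumes lam: "1 \<le> lam" and su: "Aterm m lam u summable_on UNIV"
  shows "(\<lambda>n. (wt n ^ m * cmod (u n))^2) summable_on UNIV"
    "(\<Sum>\<^sub>\<infinity>n. (wt n ^ m * cmod (u n))^2) \<le> 4 ^ m * Anorm m lam u"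
proof -
  have s: "(\<lambda>n. 4 ^ m * Aterm m lam u n) summable_on UNIV" using su by (rule summable_on_cmult_right)
  have le: "(wt n ^ m * cmod (u n))^2 \<le> 4 ^ m * Aterm m lam u n" for n
  proof -
    have "(wt n ^ m * cmod (u n))^2 = wt n ^ (2*m) * (cmod (u n))^2"
      by (simp add: power_mult_distrib power_mult[symmetric] mult.commute)
    also have "\<dots> \<le> 4 ^ m * (pw m n + lam) * (cmod (u n))^2"
      by (rule mult_right_mono[OF wt_pow_le[OF lam]]) simp
    finally show ?thesis by (simp add: Aterm_def mult.assoc)
  qed
  show "(\<lambda>n. (wt n ^ m * cmod (u n))^2) summable_on UNIV"
    by (rule summable_on_comparison_test[OF s]) (use le in auto)
  hence "(\<Sum>\<^sub>\<infinity>n. (wt n ^ m * cmod (u n))^2) \<le> (\<Sum>\<^sub>\<infinity>n. 4 ^ m * Aterm m lam u n)"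
    by (rule infsum_mono[OF _ s]) (use le in auto)
  also have "\<dots> = 4 ^ m * Anorm m lam u" unfolding Anorm_def by (rule infsum_cmult_right')
  finally show "(\<Sum>\<^sub>\<infinity>n. (wt n ^ m * cmod (u n))^2) \<le> 4 ^ m * Anorm m lam u" .
qed


lemma E0:
  fixes V u v :: "int \<Rightarrow> complex"
  assumes m: "1 \<le> m" and lam: "1 \<le> lam"
    and su: "Aterm m lam u summable_on UNIV" and sv: "Aterm m lam v summable_on UNIV"
    and tail: "\<And>T. finite T \<Longrightarrow> (\<Sum>k\<in>T. (if N < \<bar>k\<bar> then cmod (V k) / wt k ^ m else 0)^2) \<le> tau"
    and G: "finite G"
  shows "(\<Sum>(n,j)\<in>G. cmod (V (n - j)) * cmod (u j) * cmod (v n))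
     \<le> ((\<Sum>k\<in>{-N..N}. cmod (V k)) / lam + 2 * sqrt 3 * 8 ^ m * sqrt tau)
        * sqrt (Anorm m lam u) * sqrt (Anorm m lam v)"
proof -
  define U where "U j = cmod (u j)" for j
  define Y where "Y j = cmod (v j)" for j
  define c where "c k = cmod (V k)" for k
  define w where "w k = (if N < \<bar>k\<bar> then c k / wt k ^ m else 0)" for k
  define Uh where "Uh j = wt j ^ m * U j" for j
  define Yh where "Yh j = wt j ^ m * Y j" for j
  define au where "au = sqrt (Anorm m lam u)"
  define av where "av = sqrt (Anorm m lam v)"
  define M where "M = (\<Sum>k\<in>{-N..N}. cmod (V k))"
  have U0: "0 \<le> U j" and Y0: "0 \<le> Y j" and c0: "0 \<le> c j" and w0: "0 \<le> w j"
    and Uh0: "0 \<le> Uh j" and Yh0: "0 \<le> Yh j" for j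
    using wt_pos[of j] by (auto simp: U_def Y_def c_def w_def Uh_def Yh_def)
  have au0: "0 \<le> au" and av0: "0 \<le> av" using Anorm_nonneg[of lam m] lam by (auto simp: au_def av_def)
  have sU: "(\<lambda>n. (U n)^2) summable_on UNIV" and SU: "(\<Sum>\<^sub>\<infinity>n. (U n)^2) \<le> Anorm m lam u / lam"
    using A_l2[OF lam su] by (simp_all add: U_def)
  have sY: "(\<lambda>n. (Y n)^2) summable_on UNIV" and SY: "(\<Sum>\<^sub>\<infinity>n. (Y n)^2) \<le> Anorm m lam v / lam"
    using A_l2[OF lam sv] by (simp_all add: Y_def)
  have sUh: "(\<lambda>n. (Uh n)^2) summable_on UNIV" and SUh: "(\<Sum>\<^sub>\<infinity>n. (Uh n)^2) \<le> 4 ^ m * Anorm m lam u"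
    using A_hm[OF lam su] by (simp_all add: Uh_def U_def)
  have sYh: "(\<lambda>n. (Yh n)^2) summable_on UNIV" and SYh: "(\<Sum>\<^sub>\<infinity>n. (Yh n)^2) \<le> 4 ^ m * Anorm m lam v"
    using A_hm[OF lam sv] by (simp_all add: Yh_def Y_def)
  have sw: "(\<lambda>n. (w n)^2) summable_on UNIV" and Sw: "(\<Sum>\<^sub>\<infinity>n. (w n)^2) \<le> tau"
    using bsum[of "\<lambda>n. (w n)^2" tau] tail unfolding w_def c_def by auto
  have tau0: "0 \<le> tau" using tail[of "{}"] by simp
  have nU: "sqrt (\<Sum>\<^sub>\<infinity>n. (U n)^2) \<le> au / sqrt lam"
    using SU unfolding au_def by (simp add: real_sqrt_divide[symmetric])
  have nY: "sqrt (\<Sum>\<^sub>\<infinity>n. (Y n)^2) \<le> av / sqrt lam"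
    using SY unfolding av_def by (simp add: real_sqrt_divide[symmetric])
  have nUh: "sqrt (\<Sum>\<^sub>\<infinity>n. (Uh n)^2) \<le> 2 ^ m * au"
  proof -
    have "sqrt (\<Sum>\<^sub>\<infinity>n. (Uh n)^2) \<le> sqrt (4 ^ m * Anorm m lam u)" using SUh by simp
    also have "\<dots> = 2 ^ m * au" by (simp add: au_def real_sqrt_mult real_sqrt_power)
    finally show ?thesis .
  qed
  have nYh: "sqrt (\<Sum>\<^sub>\<infinity>n. (Yh n)^2) \<le> 2 ^ m * av"
  proof -
    have "sqrt (\<Sum>\<^sub>\<infinity>n. (Yh n)^2) \<le> sqrt (4 ^ m * Anorm m lam v)" using SYh by simp
    also have "\<dots> = 2 ^ m * av" by (simp add: av_def real_sqrt_mult real_sqrt_power)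
    finally show ?thesis .
  qed
  have nw: "sqrt (\<Sum>\<^sub>\<infinity>n. (w n)^2) \<le> sqrt tau" using Sw by simp
  define K where "K = (\<lambda>(n,j). n - j) ` G"
  define J where "J = snd ` G"
  have fK: "finite K" and fJ: "finite J" using G by (auto simp: K_def J_def)
  define S where "S = {-N..N}"
  have "(\<Sum>(n,j)\<in>G. cmod (V (n - j)) * cmod (u j) * cmod (v n))
      = (\<Sum>x\<in>G. (\<lambda>(n,j). c (n - j) * U j * Y n) x)"
    by (simp add: c_def U_def Y_def case_prod_beta)
  also have "\<dots> \<le> (\<Sum>k\<in>K. \<Sum>j\<in>J. c k * U j * Y (k + j))"
  proof -
    have "\<And>x. 0 \<le> (\<lambda>(n,j). c (n - j) * U j * Y n) x" using U0 Y0 c0 by (auto simp: case_prod_beta)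
    from reidx[where f="\<lambda>(n,j). c (n - j) * U j * Y n", OF G this] show ?thesis by (simp add: K_def J_def)
  qed
  also have "\<dots> = (\<Sum>k\<in>K \<inter> S. \<Sum>j\<in>J. c k * U j * Y (k + j)) + (\<Sum>k\<in>K - S. \<Sum>j\<in>J. c k * U j * Y (k + j))"
    by (rule sum.Int_Diff[OF fK])
  also have "(\<Sum>k\<in>K \<inter> S. \<Sum>j\<in>J. c k * U j * Y (k + j)) \<le> M * (au * av / lam)"
  proof -
    have "(\<Sum>k\<in>K \<inter> S. \<Sum>j\<in>J. c k * U j * Y (k + j)) = (\<Sum>k\<in>K \<inter> S. c k * (\<Sum>j\<in>J. U j * Y (k + j)))"
      by (simp add: sum_distrib_left mult.assoc)
    also have "\<dots> \<le> (\<Sum>k\<in>K \<inter> S. c k * (au / sqrt lam * (av / sqrt lam)))"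
    proof (rule sum_mono, rule mult_left_mono)
      fix k
      have "(\<Sum>j\<in>J. U j * Y (k + j)) \<le> sqrt (\<Sum>\<^sub>\<infinity>n. (U n)^2) * sqrt (\<Sum>\<^sub>\<infinity>n. (Y n)^2)"
        by (rule inner_bound(1)[OF U0 Y0 sU sY fJ])
      also have "\<dots> \<le> au / sqrt lam * (av / sqrt lam)"
        by (rule mult_mono[OF nU nY]) (use au0 lam infsum_sq_nonneg[of Y] in auto)
      finally show "(\<Sum>j\<in>J. U j * Y (k + j)) \<le> au / sqrt lam * (av / sqrt lam)" .
    qed (simp add: c0)
    also have "\<dots> = (\<Sum>k\<in>K \<inter> S. c k) * (au * av / lam)"
      using lam by (simp add: sum_distrib_right sum_divide_distrib)
    also have "\<dots> \<le> M * (au * av / lam)"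
    proof (rule mult_right_mono)
      show "(\<Sum>k\<in>K \<inter> S. c k) \<le> M" unfolding M_def c_def S_def
        by (rule sum_mono2) auto
    qed (use au0 av0 lam in simp)
    finally show ?thesis .
  qed
  also have "(\<Sum>k\<in>K - S. \<Sum>j\<in>J. c k * U j * Y (k + j)) \<le> 2 * sqrt 3 * 8 ^ m * sqrt tau * au * av"
  proof -
    have pt: "c k * U j * Y (k + j) \<le> 2 ^ m * (w k * Uh j * Y (k + j) + w k * U j * Yh (k + j))"
      if "k \<in> K - S" for k j
    proof -
      have Nk: "N < \<bar>k\<bar>" using that by (auto simp: S_def)
      have "c k = w k * wt k ^ m" using Nk wt_pos[of k] by (simp add: w_def)
      also have "\<dots> \<le> w k * (2 ^ m * (wt j ^ m + wt (k + j) ^ m))"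
        by (rule mult_left_mono[OF wt_split w0])
      finally have "c k * (U j * Y (k + j)) \<le> w k * (2 ^ m * (wt j ^ m + wt (k + j) ^ m)) * (U j * Y (k + j))"
        by (rule mult_right_mono) (simp add: U0 Y0)
      thus ?thesis by (simp add: Uh_def Yh_def algebra_simps)
    qed
    have "(\<Sum>k\<in>K - S. \<Sum>j\<in>J. c k * U j * Y (k + j))
        \<le> (\<Sum>k\<in>K - S. \<Sum>j\<in>J. 2 ^ m * (w k * Uh j * Y (k + j) + w k * U j * Yh (k + j)))"
      by (intro sum_mono pt) auto
    also have "\<dots> = 2 ^ m * ((\<Sum>k\<in>K - S. \<Sum>j\<in>J. w k * Uh j * Y (k + j))
                      + (\<Sum>k\<in>K - S. \<Sum>j\<in>J. w k * U j * Yh (k + j)))"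
      by (simp add: sum.distrib flip: sum_distrib_left)
    also have "\<dots> \<le> 2 ^ m * (sqrt 3 * (2 ^ m * av) * (sqrt tau * (2 ^ m * au))
                       + sqrt 3 * (2 ^ m * au) * (sqrt tau * (2 ^ m * av)))"
    proof (rule mult_left_mono[OF add_mono])
      have "(\<Sum>k\<in>K - S. \<Sum>j\<in>J. w k * Uh j * Y (k + j))
          \<le> (\<Sum>l\<in>(\<lambda>(k,j). k + j) ` ((K - S) \<times> J). Y l) * (sqrt (\<Sum>\<^sub>\<infinity>n. (w n)^2) * sqrt (\<Sum>\<^sub>\<infinity>n. (Uh n)^2))"
        by (rule convA[OF w0 Uh0 Y0 sw sUh]) (use fK fJ in auto)
      also have "\<dots> \<le> (sqrt 3 * (2 ^ m * av)) * (sqrt tau * (2 ^ m * au))"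
      proof (rule mult_mono)
        have "(\<Sum>l\<in>(\<lambda>(k,j). k + j) ` ((K - S) \<times> J). Y l) \<le> sqrt 3 * sqrt (\<Sum>\<^sub>\<infinity>n. (wt n ^ m * Y n)^2)"
          by (rule l1_bound[OF m Y0]) (use sYh fK fJ in \<open>auto simp: Yh_def\<close>)
        also have "\<dots> \<le> sqrt 3 * (2 ^ m * av)" using nYh by (simp add: Yh_def)
        finally show "(\<Sum>l\<in>(\<lambda>(k,j). k + j) ` ((K - S) \<times> J). Y l) \<le> sqrt 3 * (2 ^ m * av)" .
        show "sqrt (\<Sum>\<^sub>\<infinity>n. (w n)^2) * sqrt (\<Sum>\<^sub>\<infinity>n. (Uh n)^2) \<le> sqrt tau * (2 ^ m * au)"
          by (rule mult_mono[OF nw nUh]) (use tau0 infsum_sq_nonneg[of Uh] in auto)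
      qed (use av0 infsum_sq_nonneg[of Uh] infsum_sq_nonneg[of w] in \<open>auto intro!: sum_nonneg Y0\<close>)
      finally show "(\<Sum>k\<in>K - S. \<Sum>j\<in>J. w k * Uh j * Y (k + j)) \<le> sqrt 3 * (2 ^ m * av) * (sqrt tau * (2 ^ m * au))" .
      have "(\<Sum>k\<in>K - S. \<Sum>j\<in>J. w k * U j * Yh (k + j))
          \<le> (\<Sum>j\<in>J. U j) * (sqrt (\<Sum>\<^sub>\<infinity>n. (w n)^2) * sqrt (\<Sum>\<^sub>\<infinity>n. (Yh n)^2))"
        by (rule convB[OF w0 U0 Yh0 sw sYh]) (use fK fJ in auto)
      also have "\<dots> \<le> (sqrt 3 * (2 ^ m * au)) * (sqrt tau * (2 ^ m * av))"
      proof (rule mult_mono)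
        have "(\<Sum>j\<in>J. U j) \<le> sqrt 3 * sqrt (\<Sum>\<^sub>\<infinity>n. (wt n ^ m * U n)^2)"
          by (rule l1_bound[OF m U0]) (use sUh fJ in \<open>auto simp: Uh_def\<close>)
        also have "\<dots> \<le> sqrt 3 * (2 ^ m * au)" using nUh by (simp add: Uh_def)
        finally show "(\<Sum>j\<in>J. U j) \<le> sqrt 3 * (2 ^ m * au)" .
        show "sqrt (\<Sum>\<^sub>\<infinity>n. (w n)^2) * sqrt (\<Sum>\<^sub>\<infinity>n. (Yh n)^2) \<le> sqrt tau * (2 ^ m * av)"
          by (rule mult_mono[OF nw nYh]) (use tau0 infsum_sq_nonneg[of Yh] in auto)
      qed (use au0 infsum_sq_nonneg[of Yh] infsum_sq_nonneg[of w] in \<open>auto intro!: sum_nonneg U0\<close>)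
      finally show "(\<Sum>k\<in>K - S. \<Sum>j\<in>J. w k * U j * Yh (k + j)) \<le> sqrt 3 * (2 ^ m * au) * (sqrt tau * (2 ^ m * av))" .
    qed simp
    also have "\<dots> = 2 * sqrt 3 * (2 ^ m * 2 ^ m * 2 ^ m) * sqrt tau * au * av"
      by (simp add: algebra_simps)
    also have "(2::real) ^ m * 2 ^ m * 2 ^ m = 8 ^ m"
      by (simp add: power_mult_distrib[symmetric])
    finally show ?thesis .
  qed
  finally show ?thesis
    by (simp add: M_def au_def av_def algebra_simps add_divide_distrib)
qed

lemma wt_powr_neg: "wt k powr (2 * - real m) = 1 / wt k ^ (2 * m)"
proof -
  have "wt k powr (2 * - real m) = wt k powr (- real (2 * m))" by simp
  also have "\<dots> = inverse (wt k powr real (2 * m))" by (rule powr_minus)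
  also have "wt k powr real (2 * m) = wt k ^ (2 * m)" using wt_pos by (rule powr_realpow)
  finally show ?thesis by (simp add: divide_inverse)
qed

lemma E:
  fixes V :: "int \<Rightarrow> complex"
  assumes m: "1 \<le> m" and V: "(\<lambda>k. wt k powr (2 * - real m) * (cmod (V k))^2) summable_on UNIV"
  shows "\<exists>lam\<ge>1. \<forall>u v G. Aterm m lam u summable_on UNIV \<longrightarrow> Aterm m lam v summable_on UNIV \<longrightarrow> finite G \<longrightarrow>
    (\<Sum>(n,j)\<in>G. cmod (V (n - j)) * cmod (u j) * cmod (v n)) \<le> 1/4 * sqrt (Anorm m lam u) * sqrt (Anorm m lam v)"
proof -
  define g where "g k = (cmod (V k))^2 / wt k ^ (2 * m)" for k
  have g0: "0 \<le> g k" for k using wt_pos[of k] by (simp add: g_def)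
  have "g = (\<lambda>k. wt k powr (2 * - real m) * (cmod (V k))^2)"
    by (rule ext) (simp only: g_def wt_powr_neg, simp)
  hence sg: "g summable_on UNIV" using V by simp
  define tau where "tau = (1 / (16 * sqrt 3 * 8 ^ m))^2"
  have tau0: "0 < tau" by (simp add: tau_def)
  obtain F where F: "finite F" "dist (sum g F) (infsum g UNIV) \<le> tau"
    using infsum_finite_approximation[OF sg tau0] by auto
  have "bdd_above (abs ` F)" using F by simp
  then obtain N where N: "\<forall>k\<in>F. \<bar>k\<bar> \<le> N" by (auto simp: bdd_above_def)
  have tail: "(\<Sum>k\<in>T. (if N < \<bar>k\<bar> then cmod (V k) / wt k ^ m else 0)^2) \<le> tau" if T: "finite T" for T
  proof -
    have "(\<Sum>k\<in>T. (if N < \<bar>k\<bar> then cmod (V k) / wt k ^ m else 0)^2) = (\<Sum>k\<in>T. if N < \<bar>k\<bar> then g k else 0)"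
      by (rule sum.cong) (auto simp: g_def power_divide power_mult[symmetric] mult.commute)
    also have "\<dots> \<le> (\<Sum>k\<in>T - F. g k)"
    proof -
      have "(\<Sum>k\<in>T. if N < \<bar>k\<bar> then g k else 0) = (\<Sum>k\<in>T - F. if N < \<bar>k\<bar> then g k else 0)"
        by (rule sum.mono_neutral_right) (use T N in auto)
      also have "\<dots> \<le> (\<Sum>k\<in>T - F. g k)" by (rule sum_mono) (auto simp: g0)
      finally show ?thesis .
    qed
    also have "\<dots> \<le> infsum g UNIV - sum g F"
    proof -
      have "(\<Sum>k\<in>T - F. g k) + sum g F = sum g ((T - F) \<union> F)"
        by (rule sum.union_disjoint[symmetric]) (use T F in auto)
      also have "\<dots> \<le> infsum g UNIV" by (rule fsum_le[OF sg g0]) (use T F in auto)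
      finally show ?thesis by simp
    qed
    also have "\<dots> \<le> tau" using F(2) by (simp add: dist_real_def)
    finally show ?thesis .
  qed
  define M where "M = (\<Sum>k\<in>{-N..N}. cmod (V k))"
  have M0: "0 \<le> M" unfolding M_def by (simp add: sum_nonneg)
  define lam where "lam = max 1 (8 * M)"
  have lam: "1 \<le> lam" by (simp add: lam_def)
  have coef: "M / lam + 2 * sqrt 3 * 8 ^ m * sqrt tau \<le> 1/4"
  proof -
    have "M / lam \<le> 1/8" using M0 by (auto simp: lam_def field_simps max_def)
    moreover have "2 * sqrt 3 * 8 ^ m * sqrt tau = 1/8" by (simp add: tau_def)
    ultimately show ?thesis by linarith
  qed
  show ?thesis
  proof (intro exI[of _ lam] conjI allI impI lam)
    fix u v :: "int \<Rightarrow> complex" and G :: "(int \<times> int) set"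
    assume su: "Aterm m lam u summable_on UNIV" and sv: "Aterm m lam v summable_on UNIV" and G: "finite G"
    have "(\<Sum>(n,j)\<in>G. cmod (V (n - j)) * cmod (u j) * cmod (v n))
      \<le> (M / lam + 2 * sqrt 3 * 8 ^ m * sqrt tau) * sqrt (Anorm m lam u) * sqrt (Anorm m lam v)"
      unfolding M_def by (rule E0[OF m lam su sv tail G])
    also have "\<dots> \<le> 1/4 * sqrt (Anorm m lam u) * sqrt (Anorm m lam v)"
      using lam Anorm_nonneg[of lam m u] Anorm_nonneg[of lam m v]
      by (intro mult_right_mono coef) auto
    finally show "(\<Sum>(n,j)\<in>G. cmod (V (n - j)) * cmod (u j) * cmod (v n)) \<le> 1/4 * sqrt (Anorm m lam u) * sqrt (Anorm m lam v)" .
  qed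
qed


lemma Aterm_sq: "0 \<le> lam \<Longrightarrow> Aterm m lam u n = (sqrt (pw m n + lam) * cmod (u n))^2"
  unfolding Aterm_def using pw_nonneg[of m n] by (simp add: power_mult_distrib)

lemma As_diff:
  assumes "0 \<le> lam" "Aterm m lam u summable_on UNIV" "Aterm m lam v summable_on UNIV"
  shows "Aterm m lam (\<lambda>n. u n - v n) summable_on UNIV"
    "sqrt (Anorm m lam (\<lambda>n. u n - v n)) \<le> sqrt (Anorm m lam u) + sqrt (Anorm m lam v)"
proof -
  let ?h = "\<lambda>u n. sqrt (pw m n + lam) * cmod (u n)"
  have e: "Aterm m lam w = (\<lambda>n. (?h w n)^2)" for w by (rule ext) (rule Aterm_sq[OF assms(1)])
  have le: "\<bar>?h (\<lambda>n. u n - v n) n\<bar> \<le> \<bar>?h u n\<bar> + \<bar>?h v n\<bar>" for n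
  proof -
    have "cmod (u n - v n) \<le> cmod (u n) + cmod (v n)" by (rule norm_triangle_ineq4)
    hence "sqrt (pw m n + lam) * cmod (u n - v n) \<le> sqrt (pw m n + lam) * (cmod (u n) + cmod (v n))"
      by (rule mult_left_mono) (use assms(1) pw_nonneg[of m n] in simp)
    thus ?thesis using assms(1) pw_nonneg[of m n] by (simp add: abs_mult algebra_simps)
  qed
  note mk = mink[of "?h u" "?h v" "?h (\<lambda>n. u n - v n)"]
  show "Aterm m lam (\<lambda>n. u n - v n) summable_on UNIV" using mk(1) assms le by (simp add: e)
  show "sqrt (Anorm m lam (\<lambda>n. u n - v n)) \<le> sqrt (Anorm m lam u) + sqrt (Anorm m lam v)"
    using mk(2) assms le by (simp add: e Anorm_def)
qed

lemma As_add:
  assumes "0 \<le> lam" "Aterm m lam u summable_on UNIV" "Aterm m lam v summable_on UNIV"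
  shows "Aterm m lam (\<lambda>n. u n + v n) summable_on UNIV"
proof -
  have "Aterm m lam (\<lambda>n. - v n) = Aterm m lam v" by (rule ext) (simp add: Aterm_def)
  hence "Aterm m lam (\<lambda>n. - v n) summable_on UNIV"
    using assms(3) by simp
  from As_diff(1)[OF assms(1,2) this] show ?thesis by simp
qed

lemma As_scale:
  assumes "Aterm m lam u summable_on UNIV"
  shows "Aterm m lam (\<lambda>n. c * u n) summable_on UNIV" "Anorm m lam (\<lambda>n. c * u n) = (cmod c)^2 * Anorm m lam u"
proof -
  have e: "Aterm m lam (\<lambda>n. c * u n) = (\<lambda>n. (cmod c)^2 * Aterm m lam u n)"
    by (rule ext) (simp add: Aterm_def norm_mult power_mult_distrib)
  show "Aterm m lam (\<lambda>n. c * u n) summable_on UNIV" unfolding e by (rule summable_on_cmult_right[OF assms])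
  show "Anorm m lam (\<lambda>n. c * u n) = (cmod c)^2 * Anorm m lam u"
    unfolding Anorm_def e by (rule infsum_cmult_right')
qed

lemma As_bounded_mult:
  assumes "0 \<le> lam" "Aterm m lam u summable_on UNIV" "\<And>n. cmod (h n) \<le> C"
  shows "Aterm m lam (\<lambda>n. h n * u n) summable_on UNIV" "Anorm m lam (\<lambda>n. h n * u n) \<le> C^2 * Anorm m lam u"
proof -
  have le: "Aterm m lam (\<lambda>n. h n * u n) n \<le> C^2 * Aterm m lam u n" for n
  proof -
    have "(cmod (h n))^2 \<le> C^2" using assms(3)[of n] by (intro power_mono) auto
    hence "(cmod (h n))^2 * ((pw m n + lam) * (cmod (u n))^2) \<le> C^2 * ((pw m n + lam) * (cmod (u n))^2)"
      by (rule mult_right_mono) (use assms(1) pw_nonneg[of m n] in simp)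
    thus ?thesis by (simp add: Aterm_def norm_mult power_mult_distrib algebra_simps)
  qed
  have s: "(\<lambda>n. C^2 * Aterm m lam u n) summable_on UNIV" by (rule summable_on_cmult_right[OF assms(2)])
  show "Aterm m lam (\<lambda>n. h n * u n) summable_on UNIV"
    by (rule summable_on_comparison_test[OF s le]) (simp add: Aterm_nonneg assms(1))
  hence "Anorm m lam (\<lambda>n. h n * u n) \<le> (\<Sum>\<^sub>\<infinity>n. C^2 * Aterm m lam u n)"
    unfolding Anorm_def by (rule infsum_mono[OF _ s le])
  thus "Anorm m lam (\<lambda>n. h n * u n) \<le> C^2 * Anorm m lam u" by (simp add: infsum_cmult_right' Anorm_def)
qed

lemma powr_wt: "wt n powr (2 * real m) = wt n ^ (2 * m)"
  using powr_realpow[OF wt_pos, of n "2*m"] by simp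

lemma hs_m_iff:
  assumes lam: "1 \<le> lam"
  shows "u \<in> hs pos (real m) \<longleftrightarrow> parity_ok pos u \<and> Aterm m lam u summable_on UNIV"
proof -
  have le1: "Aterm m lam u n \<le> (pi ^ (2*m) + lam) * (wt n powr (2 * real m) * (cmod (u n))^2)" for n
  proof -
    have "pw m n \<le> pi ^ (2*m) * wt n ^ (2*m)"
    proof -
      have "pw m n = (\<bar>real_of_int n\<bar> * pi) ^ (2*m)" unfolding pw_def
        by (metis power_even_abs even_mult_iff even_numeral abs_mult pi_ge_zero abs_of_nonneg)
      also have "\<dots> \<le> (wt n * pi) ^ (2*m)" by (rule power_mono) (auto simp: wt_def)
      finally show ?thesis by (simp add: power_mult_distrib mult.commute)
    qed
    moreover have "lam \<le> lam * wt n ^ (2*m)" using lam wt_ge1[of n] by (simp add: one_le_power)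
    ultimately have "pw m n + lam \<le> (pi ^ (2*m) + lam) * wt n ^ (2*m)" by (simp add: algebra_simps)
    from mult_right_mono[OF this, of "(cmod (u n))^2"]
    show ?thesis unfolding Aterm_def powr_wt by (simp add: mult.assoc)
  qed
  have le2: "wt n powr (2 * real m) * (cmod (u n))^2 \<le> 4 ^ m * Aterm m lam u n" for n
    unfolding powr_wt Aterm_def using mult_right_mono[OF wt_pow_le[OF lam, of n m], of "(cmod (u n))^2"] by (simp add: mult.assoc)
  show ?thesis
  proof
    assume "u \<in> hs pos (real m)"
    hence p: "parity_ok pos u" and s: "(\<lambda>n. wt n powr (2 * real m) * (cmod (u n))^2) summable_on UNIV"
      by (auto simp: hs_def)
    have "Aterm m lam u summable_on UNIV"
      by (rule summable_on_comparison_test[OF summable_on_cmult_right[OF s, of "pi ^ (2*m) + lam"] le1])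
        (use lam in \<open>simp add: Aterm_nonneg\<close>)
    with p show "parity_ok pos u \<and> Aterm m lam u summable_on UNIV" by simp
  next
    assume a: "parity_ok pos u \<and> Aterm m lam u summable_on UNIV"
    have "(\<lambda>n. wt n powr (2 * real m) * (cmod (u n))^2) summable_on UNIV"
      by (rule summable_on_comparison_test[OF summable_on_cmult_right[OF conjunct2[OF a], of "4 ^ m"] le2]) simp
    with a show "u \<in> hs pos (real m)" by (simp add: hs_def)
  qed
qed

lemma hs0_iff: "f \<in> hs pos 0 \<longleftrightarrow> parity_ok pos f \<and> (\<lambda>n. (cmod (f n))^2) summable_on UNIV"
proof -
  have "(\<lambda>n. wt n powr (2 * 0) * (cmod (f n))^2) = (\<lambda>n. (cmod (f n))^2)"
    using wt_pos by (intro ext) (simp add: less_imp_neq[symmetric])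
  thus ?thesis unfolding hs_def by simp
qed


lemma infsum_finite_sum:
  fixes f :: "'b \<Rightarrow> 'a \<Rightarrow> 'c::{topological_comm_monoid_add, t2_space}"
  assumes "finite N" "\<And>n. n \<in> N \<Longrightarrow> f n summable_on A"
  shows "(\<lambda>j. \<Sum>n\<in>N. f n j) summable_on A \<and> infsum (\<lambda>j. \<Sum>n\<in>N. f n j) A = (\<Sum>n\<in>N. infsum (f n) A)"
  using assms
proof (induction N rule: finite_induct)
  case empty
  then show ?case by simp
next
  case (insert x F)
  have s: "(\<lambda>j. \<Sum>n\<in>F. f n j) summable_on A" and e: "infsum (\<lambda>j. \<Sum>n\<in>F. f n j) A = (\<Sum>n\<in>F. infsum (f n) A)"
    using insert by auto
  have sx: "f x summable_on A" using insert by auto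
  show ?case
    using summable_on_add[OF sx s] infsum_add[OF sx s] e insert(1,2) by simp
qed

locale frm =
  fixes m :: nat and V :: "int \<Rightarrow> complex" and lam :: real
  assumes m: "1 \<le> m" and lam: "1 \<le> lam"
    and Vpar: "parity_ok True V"
    and Eb: "\<And>u v G. Aterm m lam u summable_on UNIV \<Longrightarrow> Aterm m lam v summable_on UNIV \<Longrightarrow> finite G \<Longrightarrow>
      (\<Sum>(n,j)\<in>G. cmod (V (n - j)) * cmod (u j) * cmod (v n)) \<le> 1/4 * sqrt (Anorm m lam u) * sqrt (Anorm m lam v)"
begin

abbreviation "As u \<equiv> Aterm m lam u summable_on UNIV"
abbreviation "An u \<equiv> Anorm m lam u"

definition Mabs :: "(int \<Rightarrow> complex) \<Rightarrow> int \<Rightarrow> real" where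
  "Mabs u n = (\<Sum>\<^sub>\<infinity>j. cmod (V (n - j)) * cmod (u j))"

lemma lam0: "0 \<le> lam" using lam by simp

lemma An0: "0 \<le> An u" using Anorm_nonneg[OF lam0] .

lemma conv_abs:
  assumes su: "As u"
  shows "(\<lambda>j. cmod (V (n - j)) * cmod (u j)) summable_on UNIV"
proof -
  define d where "d i = (if i = n then 1 else 0 :: complex)" for i
  have ad: "Aterm m lam d i = (if i = n then pw m n + lam else 0)" for i by (simp add: Aterm_def d_def)
  have fd: "sum (Aterm m lam d) F \<le> pw m n + lam" if "finite F" for F
  proof -
    have "sum (Aterm m lam d) F = sum (Aterm m lam d) (F \<inter> {n})"
      by (rule sum.mono_neutral_right) (use that in \<open>auto simp: ad\<close>)
    also have "\<dots> \<le> pw m n + lam" by (cases "n \<in> F") (auto simp: ad pw_nonneg lam0 Int_insert_right)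
    finally show ?thesis .
  qed
  have sd: "As d" and Ad: "An d \<le> pw m n + lam"
    using bsum[of "Aterm m lam d", OF _ fd] Aterm_nonneg[OF lam0] by (auto simp: Anorm_def)
  show ?thesis
  proof (rule bsum(1))
    fix J :: "int set" assume J: "finite J"
    have "(\<Sum>j\<in>J. cmod (V (n - j)) * cmod (u j)) = (\<Sum>(n',j)\<in>{n} \<times> J. cmod (V (n' - j)) * cmod (u j) * cmod (d n'))"
      by (simp add: sum.cartesian_product[symmetric] d_def)
    also have "\<dots> \<le> 1/4 * sqrt (An u) * sqrt (An d)" by (rule Eb[OF su sd]) (use J in simp)
    finally show "(\<Sum>j\<in>J. cmod (V (n - j)) * cmod (u j)) \<le> 1/4 * sqrt (An u) * sqrt (An d)" .
  qed simp
qed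

lemma mult_summable:
  assumes "As u"
  shows "(\<lambda>j. V (n - j) * u j) summable_on UNIV" "cmod (mult V u n) \<le> Mabs u n"
proof -
  have a: "(\<lambda>j. norm (V (n - j) * u j)) summable_on UNIV"
    using conv_abs[OF assms, of n] by (simp add: norm_mult)
  show "(\<lambda>j. V (n - j) * u j) summable_on UNIV" by (rule abs_summable_summable[OF a])
  show "cmod (mult V u n) \<le> Mabs u n"
    unfolding mult_def Mabs_def using norm_infsum_bound[OF a] by (simp add: norm_mult)
qed

lemma Mabs_nonneg: "0 \<le> Mabs u n"
  unfolding Mabs_def by (rule infsum_nonneg) simp

lemma Mabs_pair:
  assumes su: "As u" and sv: "As v"
  shows "(\<lambda>n. Mabs u n * cmod (v n)) summable_on UNIV"
    "(\<Sum>\<^sub>\<infinity>n. Mabs u n * cmod (v n)) \<le> 1/4 * sqrt (An u) * sqrt (An v)"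
proof -
  have fin: "(\<Sum>n\<in>N. Mabs u n * cmod (v n)) \<le> 1/4 * sqrt (An u) * sqrt (An v)" if N: "finite N" for N
  proof -
    let ?f = "\<lambda>n j. cmod (V (n - j)) * cmod (u j) * cmod (v n)"
    have sf: "?f n summable_on UNIV" for n
      using summable_on_cmult_left[OF conv_abs[OF su, of n], of "cmod (v n)"] by simp
    have "(\<Sum>n\<in>N. Mabs u n * cmod (v n)) = (\<Sum>n\<in>N. infsum (?f n) UNIV)"
      unfolding Mabs_def by (simp add: infsum_cmult_left')
    also have "\<dots> = infsum (\<lambda>j. \<Sum>n\<in>N. ?f n j) UNIV"
      using infsum_finite_sum[OF N, of ?f UNIV] sf by simp
    also have "\<dots> \<le> 1/4 * sqrt (An u) * sqrt (An v)"
    proof (rule infsum_le_finite_sums)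
      show "(\<lambda>j. \<Sum>n\<in>N. ?f n j) summable_on UNIV" using infsum_finite_sum[OF N, of ?f UNIV] sf by simp
      fix J :: "int set" assume J: "finite J"
      have "(\<Sum>j\<in>J. \<Sum>n\<in>N. ?f n j) = (\<Sum>(n,j)\<in>N \<times> J. ?f n j)"
        by (subst sum.swap) (simp add: sum.cartesian_product)
      also have "\<dots> \<le> 1/4 * sqrt (An u) * sqrt (An v)" by (rule Eb[OF su sv]) (use N J in simp)
      finally show "(\<Sum>j\<in>J. \<Sum>n\<in>N. ?f n j) \<le> 1/4 * sqrt (An u) * sqrt (An v)" .
    qed
    finally show ?thesis .
  qed
  show "(\<lambda>n. Mabs u n * cmod (v n)) summable_on UNIV"
    by (rule bsum(1)[OF _ fin]) (simp add: Mabs_nonneg)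
  show "(\<Sum>\<^sub>\<infinity>n. Mabs u n * cmod (v n)) \<le> 1/4 * sqrt (An u) * sqrt (An v)"
    by (rule bsum(2)[OF _ fin]) (simp add: Mabs_nonneg)
qed

lemma pairV:
  assumes su: "As u" and sv: "As v"
  shows "(\<lambda>n. norm (mult V u n * cnj (v n))) summable_on UNIV"
    "(\<lambda>n. mult V u n * cnj (v n)) summable_on UNIV"
    "cmod (pair (mult V u) v) \<le> 1/4 * sqrt (An u) * sqrt (An v)"
proof -
  have le: "norm (mult V u n * cnj (v n)) \<le> norm (Mabs u n * cmod (v n))" for n
    using mult_summable(2)[OF su, of n] Mabs_nonneg[of u n]
    by (simp add: norm_mult mult_right_mono)
  have a2: "(\<lambda>n. norm (Mabs u n * cmod (v n))) summable_on UNIV"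
    using Mabs_pair(1)[OF su sv] Mabs_nonneg by (simp add: abs_mult)
  show a: "(\<lambda>n. norm (mult V u n * cnj (v n))) summable_on UNIV"
    by (rule summable_on_comparison_test[OF Mabs_pair(1)[OF su sv]]) (use le Mabs_nonneg in \<open>auto simp: abs_mult\<close>)
  show "(\<lambda>n. mult V u n * cnj (v n)) summable_on UNIV" by (rule abs_summable_summable[OF a])
  have "cmod (pair (mult V u) v) \<le> (\<Sum>\<^sub>\<infinity>n. norm (mult V u n * cnj (v n)))"
    unfolding pair_def by (rule norm_infsum_bound[OF a])
  also have "\<dots> \<le> (\<Sum>\<^sub>\<infinity>n. Mabs u n * cmod (v n))"
    by (rule infsum_mono[OF a Mabs_pair(1)[OF su sv]]) (use le Mabs_nonneg in \<open>simp add: abs_mult\<close>)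
  also have "\<dots> \<le> 1/4 * sqrt (An u) * sqrt (An v)" by (rule Mabs_pair(2)[OF su sv])
  finally show "cmod (pair (mult V u) v) \<le> 1/4 * sqrt (An u) * sqrt (An v)" .
qed

lemma Dpow_eq: "Dpow m u n = complex_of_real (pw m n) * u n"
  by (simp only: Dpow_def pw_def)

lemma pairD:
  assumes su: "As u" and sv: "As v"
  shows "(\<lambda>n. norm (Dpow m u n * cnj (v n))) summable_on UNIV"
    "(\<lambda>n. Dpow m u n * cnj (v n)) summable_on UNIV"
proof -
  let ?h = "\<lambda>w n. sqrt (pw m n + lam) * cmod (w n)"
  have e: "Aterm m lam w = (\<lambda>n. (?h w n)^2)" for w by (rule ext) (rule Aterm_sq[OF lam0])
  have c: "(\<lambda>n. \<bar>?h u n\<bar> * \<bar>?h v n\<bar>) summable_on UNIV"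
    by (rule cs(1)) (use su sv in \<open>simp_all add: e\<close>)
  have le: "norm (Dpow m u n * cnj (v n)) \<le> \<bar>?h u n\<bar> * \<bar>?h v n\<bar>" for n
  proof -
    have "norm (Dpow m u n * cnj (v n)) = pw m n * (cmod (u n) * cmod (v n))"
      using pw_nonneg[of m n] by (simp add: Dpow_eq norm_mult)
    also have "\<dots> \<le> (pw m n + lam) * (cmod (u n) * cmod (v n))"
      by (rule mult_right_mono) (auto simp: lam0)
    also have "\<dots> = \<bar>?h u n\<bar> * \<bar>?h v n\<bar>"
      using pw_nonneg[of m n] lam0 by (simp add: abs_mult algebra_simps)
    finally show ?thesis .
  qed
  show a: "(\<lambda>n. norm (Dpow m u n * cnj (v n))) summable_on UNIV"
    by (rule summable_on_comparison_test[OF c]) (use le in auto)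
  show "(\<lambda>n. Dpow m u n * cnj (v n)) summable_on UNIV" by (rule abs_summable_summable[OF a])
qed

lemma pw_summable:
  assumes su: "As u"
  shows "(\<lambda>n. pw m n * (cmod (u n))^2) summable_on UNIV"
  by (rule summable_on_comparison_test[OF su]) (auto simp: Aterm_def pw_nonneg lam0 mult_right_mono)

lemma pairD_self:
  assumes su: "As u"
  shows "pair (Dpow m u) u = complex_of_real (\<Sum>\<^sub>\<infinity>n. pw m n * (cmod (u n))^2)"
proof -
  have e: "Dpow m u n * cnj (u n) = complex_of_real (pw m n * (cmod (u n))^2)" for n
  proof -
    have "complex_of_real (pw m n * (cmod (u n))^2) = complex_of_real (pw m n) * (u n * cnj (u n))"
      by (simp only: of_real_mult complex_norm_square)
    thus ?thesis by (simp add: Dpow_eq mult.assoc) metis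
  qed
  have "((\<lambda>n. complex_of_real (pw m n * (cmod (u n))^2)) has_sum complex_of_real (\<Sum>\<^sub>\<infinity>n. pw m n * (cmod (u n))^2)) UNIV"
    by (rule has_sum_of_real) (use pw_summable[OF su] in \<open>simp add: summable_iff_has_sum_infsum\<close>)
  thus ?thesis unfolding pair_def e by (rule infsumI)
qed

lemma An_split:
  assumes su: "As u"
  shows "An u = (\<Sum>\<^sub>\<infinity>n. pw m n * (cmod (u n))^2) + lam * (\<Sum>\<^sub>\<infinity>n. (cmod (u n))^2)"
proof -
  have s2: "(\<lambda>n. (cmod (u n))^2) summable_on UNIV" by (rule A_l2(1)[OF lam su])
  have "An u = (\<Sum>\<^sub>\<infinity>n. pw m n * (cmod (u n))^2 + lam * (cmod (u n))^2)"
    unfolding Anorm_def Aterm_def by (simp add: algebra_simps)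
  also have "\<dots> = (\<Sum>\<^sub>\<infinity>n. pw m n * (cmod (u n))^2) + (\<Sum>\<^sub>\<infinity>n. lam * (cmod (u n))^2)"
    by (rule infsum_add[OF pw_summable[OF su] summable_on_cmult_right[OF s2]])
  also have "(\<Sum>\<^sub>\<infinity>n. lam * (cmod (u n))^2) = lam * (\<Sum>\<^sub>\<infinity>n. (cmod (u n))^2)"
    by (rule infsum_cmult_right')
  finally show ?thesis .
qed

lemma form_quad:
  assumes su: "As u"
  shows "pair (Dpow m u) u + pair (mult V u) u + complex_of_real (lam * (\<Sum>\<^sub>\<infinity>n. (cmod (u n))^2))
     = complex_of_real (An u) + pair (mult V u) u"
  using An_split[OF su] pairD_self[OF su] by simp

lemma infsum_diff':
  fixes f g :: "'a \<Rightarrow> complex"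
  assumes "f summable_on A" "g summable_on A"
  shows "infsum (\<lambda>x. f x - g x) A = infsum f A - infsum g A"
  using infsum_add[OF assms(1) iffD2[OF summable_on_uminus assms(2)]] infsum_uminus[of g A] by simp

lemma mult_diff:
  assumes su: "As u" and sw: "As w"
  shows "mult V (\<lambda>n. u n - w n) n = mult V u n - mult V w n"
proof -
  have "mult V (\<lambda>n. u n - w n) n = (\<Sum>\<^sub>\<infinity>j. V (n - j) * u j - V (n - j) * w j)"
    unfolding mult_def by (simp add: algebra_simps)
  also have "\<dots> = mult V u n - mult V w n"
    unfolding mult_def by (rule infsum_diff'[OF mult_summable(1)[OF su] mult_summable(1)[OF sw]])
  finally show ?thesis .
qed

lemma mult_scale: "mult V (\<lambda>n. c * u n) n = c * mult V u n"
  unfolding mult_def by (simp add: mult.left_commute infsum_cmult_right')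

lemma pair_Sexpr:
  assumes su: "As u" and sv: "As v"
  shows "pair (Sexpr m V u) v = pair (Dpow m u) v + pair (mult V u) v"
  unfolding pair_def Sexpr_def
  using infsum_add[OF pairD(2)[OF su sv] pairV(2)[OF su sv]] by (simp add: algebra_simps)

end


definition nrm :: "(int \<Rightarrow> complex) \<Rightarrow> real" where
  "nrm f = sqrt (\<Sum>\<^sub>\<infinity>n. (cmod (f n))^2)"

abbreviation l2s :: "(int \<Rightarrow> complex) \<Rightarrow> bool" where
  "l2s f \<equiv> (\<lambda>n. (cmod (f n))^2) summable_on UNIV"

lemma nrm_nonneg: "0 \<le> nrm f"
  unfolding nrm_def using infsum_sq_nonneg[of "\<lambda>n. cmod (f n)"] by simp

lemma nrm_tri:
  assumes "l2s (\<lambda>n. f n - g n)" "l2s (\<lambda>n. g n - h n)"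
  shows "l2s (\<lambda>n. f n - h n)" "nrm (\<lambda>n. f n - h n) \<le> nrm (\<lambda>n. f n - g n) + nrm (\<lambda>n. g n - h n)"
proof -
  have le: "\<bar>cmod (f n - h n)\<bar> \<le> \<bar>cmod (f n - g n)\<bar> + \<bar>cmod (g n - h n)\<bar>" for n
    using norm_triangle_ineq[of "f n - g n" "g n - h n"] by simp
  note mk = mink[of "\<lambda>n. cmod (f n - g n)" "\<lambda>n. cmod (g n - h n)" "\<lambda>n. cmod (f n - h n)", OF assms le]
  show "l2s (\<lambda>n. f n - h n)" using mk(1) .
  show "nrm (\<lambda>n. f n - h n) \<le> nrm (\<lambda>n. f n - g n) + nrm (\<lambda>n. g n - h n)" using mk(2) by (simp add: nrm_def)
qed

lemma nrm_add:
  assumes "l2s a" "l2s b"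
  shows "l2s (\<lambda>n. a n + b n)" "nrm (\<lambda>n. a n + b n) \<le> nrm a + nrm b"
proof -
  have le: "\<bar>cmod (a n + b n)\<bar> \<le> \<bar>cmod (a n)\<bar> + \<bar>cmod (b n)\<bar>" for n
    using norm_triangle_ineq[of "a n" "b n"] by simp
  note mk = mink[of "\<lambda>n. cmod (a n)" "\<lambda>n. cmod (b n)" "\<lambda>n. cmod (a n + b n)", OF assms le]
  show "l2s (\<lambda>n. a n + b n)" using mk(1) .
  show "nrm (\<lambda>n. a n + b n) \<le> nrm a + nrm b" using mk(2) by (simp add: nrm_def)
qed

lemma l2s_diff:
  assumes "l2s a" "l2s b"
  shows "l2s (\<lambda>n. a n - b n)"
proof -
  have "l2s (\<lambda>n. - b n)" using assms(2) by simp
  from nrm_add(1)[OF assms(1) this] show ?thesis by simp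
qed

lemma nrm_mult:
  assumes "l2s f" "\<And>n. cmod (c n) \<le> C"
  shows "l2s (\<lambda>n. c n * f n)" "nrm (\<lambda>n. c n * f n) \<le> C * nrm f"
proof -
  have C0: "0 \<le> C" using assms(2)[of 0] norm_ge_zero order_trans by blast
  have le: "\<bar>cmod (c n * f n)\<bar> \<le> C * \<bar>cmod (f n)\<bar>" for n
    using assms(2)[of n] by (simp add: norm_mult mult_right_mono)
  note sc = sq_cmp[of "\<lambda>n. cmod (f n)" "\<lambda>n. cmod (c n * f n)", OF assms(1) le]
  show "l2s (\<lambda>n. c n * f n)" using sc(1) .
  have "nrm (\<lambda>n. c n * f n) \<le> sqrt (C^2 * (\<Sum>\<^sub>\<infinity>n. (cmod (f n))^2))"
    unfolding nrm_def using sc(2) by simp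
  also have "\<dots> = C * nrm f" using C0 by (simp add: real_sqrt_mult nrm_def)
  finally show "nrm (\<lambda>n. c n * f n) \<le> C * nrm f" .
qed

lemma coord_le:
  assumes "l2s f"
  shows "cmod (f n) \<le> nrm f"
proof -
  have "(cmod (f n))^2 = sum (\<lambda>n. (cmod (f n))^2) {n}" by simp
  also have "\<dots> \<le> (\<Sum>\<^sub>\<infinity>n. (cmod (f n))^2)" by (rule fsum_le[OF assms]) auto
  finally have "sqrt ((cmod (f n))^2) \<le> nrm f" unfolding nrm_def by (rule real_sqrt_le_mono)
  thus ?thesis by simp
qed

lemma nrm_le_0:
  assumes "l2s f" "nrm f \<le> 0"
  shows "f n = 0"
proof -
  have "cmod (f n) \<le> 0" using coord_le[OF assms(1), of n] assms(2) by linarith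
  thus ?thesis by simp
qed

lemma nrm_sym: "nrm (\<lambda>n. f n - g n) = nrm (\<lambda>n. g n - f n)"
  unfolding nrm_def by (simp add: norm_minus_commute)

lemma nrm_bound:
  assumes "\<And>F. finite F \<Longrightarrow> (\<Sum>n\<in>F. (cmod (f n))^2) \<le> B^2" "0 \<le> B"
  shows "l2s f" "nrm f \<le> B"
proof -
  show "l2s f" by (rule bsum(1)[OF _ assms(1)]) auto
  have "(\<Sum>\<^sub>\<infinity>n. (cmod (f n))^2) \<le> B^2" by (rule bsum(2)[OF _ assms(1)]) auto
  hence "nrm f \<le> sqrt (B^2)" unfolding nrm_def by (rule real_sqrt_le_mono)
  thus "nrm f \<le> B" using assms(2) by simp
qed

lemma fin_le_nrm:
  assumes "l2s f" "finite F"
  shows "(\<Sum>n\<in>F. (cmod (f n))^2) \<le> (nrm f)^2"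
  using fsum_le[OF assms(1) _ assms(2)] infsum_sq_nonneg[of "\<lambda>n. cmod (f n)"] by (simp add: nrm_def)


lemma fixpt:
  fixes T :: "(int \<Rightarrow> complex) \<Rightarrow> (int \<Rightarrow> complex)"
  assumes pres: "\<And>y. l2s y \<Longrightarrow> l2s (T y)"
    and contr: "\<And>y1 y2. l2s y1 \<Longrightarrow> l2s y2 \<Longrightarrow> nrm (\<lambda>n. T y1 n - T y2 n) \<le> 1/2 * nrm (\<lambda>n. y1 n - y2 n)"
  shows "\<exists>y. l2s y \<and> T y = y"
proof -
  define Y where "Y k = (T ^^ k) (\<lambda>_. 0)" for k
  have Y0: "Y 0 = (\<lambda>_. 0)" and YS: "Y (Suc k) = T (Y k)" for k by (simp_all add: Y_def)
  have lY: "l2s (Y k)" for k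
    by (induction k) (simp_all add: YS pres Y0)
  have ld: "l2s (\<lambda>n. Y k n - Y l n)" for k l by (rule l2s_diff[OF lY lY])
  define D where "D = nrm (\<lambda>n. Y 1 n - Y 0 n)"
  have D0: "0 \<le> D" by (simp add: D_def nrm_nonneg)
  have stp: "nrm (\<lambda>n. Y (Suc k) n - Y k n) \<le> (1/2)^k * D" for k
  proof (induction k)
    case 0 thus ?case by (simp add: D_def)
  next
    case (Suc k)
    have "nrm (\<lambda>n. Y (Suc (Suc k)) n - Y (Suc k) n) \<le> 1/2 * nrm (\<lambda>n. Y (Suc k) n - Y k n)"
      using contr[OF lY[of "Suc k"] lY[of k]] by (simp only: YS)
    also have "\<dots> \<le> 1/2 * ((1/2)^k * D)" using Suc by simp
    finally show ?case by simp
  qed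
  have cauchy: "nrm (\<lambda>n. Y l n - Y k n) \<le> 2 * D * (1/2)^k - 2 * D * (1/2)^l" if "k \<le> l" for k l
    using that
  proof (induction l rule: dec_induct)
    case base
    then show ?case by (simp add: nrm_def)
  next
    case (step l)
    have "nrm (\<lambda>n. Y (Suc l) n - Y k n) \<le> nrm (\<lambda>n. Y (Suc l) n - Y l n) + nrm (\<lambda>n. Y l n - Y k n)"
      by (rule nrm_tri(2)[OF ld ld])
    also have "\<dots> \<le> (1/2)^l * D + (2 * D * (1/2)^k - 2 * D * (1/2)^l)"
      using step.IH stp[of l] by linarith
    also have "\<dots> = 2 * D * (1/2)^k - 2 * D * (1/2)^(Suc l)" by simp
    finally show ?case .
  qed
  have cauchy2: "nrm (\<lambda>n. Y l n - Y k n) \<le> 2 * D * (1/2)^k" if "k \<le> l" for k l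
  proof -
    have "0 \<le> 2 * D * (1/2)^l" using D0 by simp
    thus ?thesis using cauchy[OF that] by linarith
  qed
  have cauchy3: "nrm (\<lambda>n. Y k n - Y l n) \<le> 2 * D * (1/2)^k" if "k \<le> l" for k l
    using cauchy2[OF that] nrm_sym[of "Y k" "Y l"] by simp
  have conv: "convergent (\<lambda>k. Y k n)" for n
  proof -
    have "Cauchy (\<lambda>k. Y k n)"
    proof (rule metric_CauchyI)
      fix e :: real assume e: "0 < e"
      have "(\<lambda>k. 2 * D * (1/2)^k) \<longlonglongrightarrow> 2 * D * 0"
        by (intro tendsto_mult tendsto_const LIMSEQ_power_zero) simp
      then obtain M where M: "\<And>k. k \<ge> M \<Longrightarrow> \<bar>2 * D * (1/2)^k\<bar> < e"
        using e by (auto simp: LIMSEQ_def dist_real_def)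
      show "\<exists>M. \<forall>k\<ge>M. \<forall>l\<ge>M. dist (Y k n) (Y l n) < e"
      proof (intro exI allI impI)
        fix k l assume k: "k \<ge> M" and l: "l \<ge> M"
        have b: "\<And>k l. k \<ge> M \<Longrightarrow> k \<le> l \<Longrightarrow> dist (Y k n) (Y l n) < e"
        proof -
          fix k l assume k: "k \<ge> M" and kl: "k \<le> l"
          have "dist (Y k n) (Y l n) = cmod (Y k n - Y l n)" by (simp add: dist_norm)
          also have "\<dots> \<le> nrm (\<lambda>n. Y k n - Y l n)" by (rule coord_le[OF ld])
          also have "\<dots> \<le> 2 * D * (1/2)^k" by (rule cauchy3[OF kl])
          also have "\<dots> < e" using M[OF k] by simp
          finally show "dist (Y k n) (Y l n) < e" .
        qed
        show "dist (Y k n) (Y l n) < e"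
        proof (cases "k \<le> l")
          case True thus ?thesis using b k by blast
        next
          case False thus ?thesis using b[of l k] l by (simp add: dist_commute)
        qed
      qed
    qed
    thus ?thesis by (simp add: Cauchy_convergent_iff)
  qed
  define Yi where "Yi n = lim (\<lambda>k. Y k n)" for n
  have Ylim: "(\<lambda>k. Y k n) \<longlonglongrightarrow> Yi n" for n
    unfolding Yi_def using conv[of n] by (simp add: convergent_LIMSEQ_iff)
  have tail: "l2s (\<lambda>n. Y k n - Yi n) \<and> nrm (\<lambda>n. Y k n - Yi n) \<le> 2 * D * (1/2)^k" for k
  proof -
    have fin: "(\<Sum>n\<in>F. (cmod (Y k n - Yi n))^2) \<le> (2 * D * (1/2)^k)^2" if F: "finite F" for F
    proof -
      have lim: "(\<lambda>l. \<Sum>n\<in>F. (cmod (Y k n - Y l n))^2) \<longlonglongrightarrow> (\<Sum>n\<in>F. (cmod (Y k n - Yi n))^2)"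
        by (intro tendsto_sum tendsto_power tendsto_norm tendsto_diff tendsto_const Ylim)
      have ev: "\<forall>\<^sub>F l in sequentially. (\<Sum>n\<in>F. (cmod (Y k n - Y l n))^2) \<le> (2 * D * (1/2)^k)^2"
      proof (rule eventually_sequentiallyI[of k])
        fix l assume kl: "k \<le> l"
        have "(\<Sum>n\<in>F. (cmod (Y k n - Y l n))^2) \<le> (nrm (\<lambda>n. Y k n - Y l n))^2"
          by (rule fin_le_nrm[OF ld F])
        also have "\<dots> \<le> (2 * D * (1/2)^k)^2"
          by (rule power_mono[OF cauchy3[OF kl] nrm_nonneg])
        finally show "(\<Sum>n\<in>F. (cmod (Y k n - Y l n))^2) \<le> (2 * D * (1/2)^k)^2" .
      qed
      show ?thesis by (rule tendsto_le[OF _ tendsto_const lim ev]) simp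
    qed
    show ?thesis using nrm_bound[OF fin] D0 by simp
  qed
  have lYi: "l2s Yi" using conjunct1[OF tail[of 0]] by (simp add: Y0)
  have lTYi: "l2s (T Yi)" by (rule pres[OF lYi])
  have bnd: "nrm (\<lambda>n. T Yi n - Yi n) \<le> 2 * D * (1/2)^k" for k
  proof -
    have l1: "l2s (\<lambda>n. T Yi n - Y (Suc k) n)" by (rule l2s_diff[OF lTYi lY])
    have l2: "l2s (\<lambda>n. Y (Suc k) n - Yi n)" using tail by blast
    have "nrm (\<lambda>n. T Yi n - Yi n) \<le> nrm (\<lambda>n. T Yi n - Y (Suc k) n) + nrm (\<lambda>n. Y (Suc k) n - Yi n)"
      by (rule nrm_tri(2)[OF l1 l2])
    also have "nrm (\<lambda>n. T Yi n - Y (Suc k) n) \<le> 1/2 * nrm (\<lambda>n. Yi n - Y k n)"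
      unfolding YS by (rule contr[OF lYi lY])
    also have "nrm (\<lambda>n. Yi n - Y k n) = nrm (\<lambda>n. Y k n - Yi n)" by (rule nrm_sym)
    also have "1/2 * nrm (\<lambda>n. Y k n - Yi n) + nrm (\<lambda>n. Y (Suc k) n - Yi n)
        \<le> 1/2 * (2 * D * (1/2)^k) + 2 * D * (1/2)^(Suc k)"
      using tail[of k] tail[of "Suc k"] by linarith
    also have "\<dots> = 2 * D * (1/2)^k" by simp
    finally show ?thesis by simp
  qed
  have "nrm (\<lambda>n. T Yi n - Yi n) \<le> 0"
  proof -
    have "(\<lambda>k. 2 * D * (1/2)^k) \<longlonglongrightarrow> 2 * D * 0"
      by (intro tendsto_mult tendsto_const LIMSEQ_power_zero) simp
    hence "nrm (\<lambda>n. T Yi n - Yi n) \<le> 2 * D * 0"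
      by (rule tendsto_lowerbound) (use bnd in \<open>auto intro: always_eventually\<close>)
    thus ?thesis by simp
  qed
  hence "T Yi n - Yi n = 0" for n by (rule nrm_le_0[OF l2s_diff[OF lTYi lYi]])
  hence "T Yi = Yi" by (intro ext) simp
  with lYi show ?thesis by blast
qed


lemma arg_small:
  assumes "0 < Re w" "\<bar>Im w\<bar> \<le> Re w"
  shows "\<bar>Arg w\<bar> \<le> pi / 4"
proof -
  have A: "Arg w = arctan (Im w / Re w)" by (rule arg_conv_arctan[OF assms(1)])
  have q1: "Im w / Re w \<le> 1" using assms by (simp add: divide_le_eq_1_pos)
  have q2: "-1 \<le> Im w / Re w" using assms by (simp add: le_divide_eq)
  have "arctan (Im w / Re w) \<le> arctan 1" by (rule iffD2[OF arctan_le_iff q1])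
  moreover have "arctan (-1) \<le> arctan (Im w / Re w)" by (rule iffD2[OF arctan_le_iff q2])
  ultimately show ?thesis using A by (simp add: arctan_one arctan_minus)
qed

lemma outside_sector:
  assumes "z \<notin> sector (- lam) (pi / 4)"
  shows "Re (z + complex_of_real lam) < \<bar>Im (z + complex_of_real lam)\<bar>"
proof (rule ccontr)
  let ?w = "z + complex_of_real lam"
  assume "\<not> Re ?w < \<bar>Im ?w\<bar>"
  hence h: "\<bar>Im ?w\<bar> \<le> Re ?w" by simp
  have "z \<noteq> - complex_of_real lam" using assms by (auto simp: sector_def)
  hence ne: "?w \<noteq> 0" by (simp add: eq_neg_iff_add_eq_0)
  have "0 < Re ?w"
  proof (rule ccontr)
    assume "\<not> 0 < Re ?w"
    hence "Re ?w = 0" "Im ?w = 0" using h by auto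
    hence "?w = 0" by (simp add: complex_eq_iff)
    with ne show False by simp
  qed
  from arg_small[OF this h] have "\<bar>Arg ?w\<bar> \<le> pi / 4" .
  thus False using assms by (auto simp: sector_def)
qed

lemma lin4: "(a::real) \<le> b \<Longrightarrow> 0 \<le> c \<Longrightarrow> 0 \<le> b \<Longrightarrow> a \<le> 4 * (b + c)"
  by (simp add: distrib_left)

lemma lin5: "(a::real) \<le> 2 * (p + q) \<Longrightarrow> q \<le> r \<Longrightarrow> 0 \<le> p \<Longrightarrow> 0 \<le> q \<Longrightarrow> a \<le> 4 * (p + r)"
  by (simp add: distrib_left)

lemma dist_outside:
  fixes x :: real and w :: complex
  assumes "0 < x" "Re w < \<bar>Im w\<bar>"
  shows "x \<le> 2 * cmod (complex_of_real x - w)"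
proof -
  let ?s = "Re w" and ?t = "Im w"
  have n: "(cmod (complex_of_real x - w))^2 = (x - ?s)^2 + ?t^2"
    by (simp add: cmod_def)
  have "x^2 \<le> 4 * ((x - ?s)^2 + ?t^2)"
  proof (cases "?s \<le> 0")
    case True
    hence "x^2 \<le> (x - ?s)^2" using assms(1) by (intro power_mono) auto
    thus ?thesis by (rule lin4) simp_all
  next
    case False
    hence "?s^2 \<le> ?t^2" using assms(2) by (metis abs_le_square_iff abs_of_nonneg less_imp_le not_le)
    moreover have "x^2 \<le> 2 * ((x - ?s)^2 + ?s^2)"
    proof -
      have "2 * ((x - ?s)^2 + ?s^2) - x^2 = (x - 2 * ?s)^2" by (simp add: power2_eq_square algebra_simps)
      thus ?thesis using zero_le_power2[of "x - 2 * ?s"] by linarith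
    qed
    ultimately show ?thesis using zero_le_power2[of "x - ?s"] zero_le_power2[of ?s] by (intro lin5) auto
  qed
  also have "\<dots> = (2 * cmod (complex_of_real x - w))^2" using n by (simp add: power_mult_distrib)
  finally show ?thesis by (rule power2_le_imp_le) simp
qed


context frm begin

abbreviation "tq u \<equiv> pair (Dpow m u) u + pair (mult V u) u"

lemma N2_le_An:
  assumes su: "As u"
  shows "lam * (\<Sum>\<^sub>\<infinity>n. (cmod (u n))^2) \<le> An u"
proof -
  have "0 \<le> (\<Sum>\<^sub>\<infinity>n. pw m n * (cmod (u n))^2)" by (rule infsum_nonneg) (simp add: pw_nonneg)
  thus ?thesis using An_split[OF su] by simp
qed

lemma Q_bound:
  assumes su: "As u"
  shows "cmod (pair (mult V u) u) \<le> An u / 4"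
proof -
  have "cmod (pair (mult V u) u) \<le> 1/4 * sqrt (An u) * sqrt (An u)" by (rule pairV(3)[OF su su])
  also have "\<dots> = An u / 4" using An0[of u] by (simp add: real_sqrt_mult_self)
  finally show ?thesis .
qed

lemma tq_bounds:
  assumes su: "As u"
  shows "cmod (tq u) \<le> 9/4 * An u" "3/4 * An u \<le> cmod (tq u) + lam * (\<Sum>\<^sub>\<infinity>n. (cmod (u n))^2)"
proof -
  let ?N = "(\<Sum>\<^sub>\<infinity>n. (cmod (u n))^2)"
  let ?Q = "pair (mult V u) u"
  have e: "tq u = complex_of_real (An u) + ?Q - complex_of_real (lam * ?N)"
    using form_quad[OF su] by (simp add: algebra_simps)
  have Q: "cmod ?Q \<le> An u / 4" by (rule Q_bound[OF su])
  have N: "lam * ?N \<le> An u" by (rule N2_le_An[OF su])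
  have N0: "0 \<le> lam * ?N" using lam0 infsum_sq_nonneg[of "\<lambda>n. cmod (u n)"] by simp
  have t1: "cmod (tq u) \<le> cmod (complex_of_real (An u) + ?Q) + cmod (complex_of_real (lam * ?N))"
    unfolding e by (rule norm_triangle_ineq4)
  have t2: "cmod (complex_of_real (An u) + ?Q) \<le> cmod (complex_of_real (An u)) + cmod ?Q"
    by (rule norm_triangle_ineq)
  have t3: "cmod (complex_of_real (lam * ?N)) = lam * ?N" using N0 by (simp only: norm_of_real abs_of_nonneg)
  have t4: "cmod (complex_of_real (An u)) = An u" using An0[of u] by (simp only: norm_of_real abs_of_nonneg)
  show "cmod (tq u) \<le> 9/4 * An u" using t1 t2 t3 t4 Q N by linarith
  have "complex_of_real (An u) = tq u + complex_of_real (lam * ?N) - ?Q" using e by simp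
  hence "cmod (complex_of_real (An u)) \<le> cmod (tq u + complex_of_real (lam * ?N)) + cmod ?Q"
    by (metis norm_triangle_ineq4)
  also have "cmod (tq u + complex_of_real (lam * ?N)) \<le> cmod (tq u) + cmod (complex_of_real (lam * ?N))"
    by (rule norm_triangle_ineq)
  finally have "An u \<le> cmod (tq u) + cmod (complex_of_real (lam * ?N)) + cmod ?Q"
    using An0[of u] by simp
  thus "3/4 * An u \<le> cmod (tq u) + lam * ?N" using Q N0 t3 by linarith
qed

lemma form_sector:
  assumes su: "As u" and n1: "(\<Sum>\<^sub>\<infinity>n. (cmod (u n))^2) = 1"
  shows "tq u \<in> sector (- lam) (pi / 4)"
proof -
  let ?Q = "pair (mult V u) u"
  let ?w = "tq u - complex_of_real (- lam)"
  have e: "?w = complex_of_real (An u) + ?Q"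
    using form_quad[OF su] n1 by (simp add: algebra_simps)
  have Q: "cmod ?Q \<le> An u / 4" by (rule Q_bound[OF su])
  have A: "lam \<le> An u" using N2_le_An[OF su] n1 by simp
  have re: "Re ?w = An u + Re ?Q" using arg_cong[OF e, of Re] by simp
  have im: "Im ?w = Im ?Q" using arg_cong[OF e, of Im] by simp
  have "\<bar>Re ?Q\<bar> \<le> cmod ?Q" by (rule abs_Re_le_cmod)
  moreover have "\<bar>Im ?Q\<bar> \<le> cmod ?Q" by (rule abs_Im_le_cmod)
  ultimately have "0 < Re ?w" "\<bar>Im ?w\<bar> \<le> Re ?w" using re im Q A lam by linarith+
  from arg_small[OF this] show ?thesis by (simp add: sector_def)
qed

lemma l2norm_nrm: "l2norm f = nrm f" by (simp add: l2norm_def nrm_def)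

lemma coord_conv:
  assumes "\<And>k. l2s (\<lambda>i. X k i - u i)" "(\<lambda>k. nrm (\<lambda>i. X k i - u i)) \<longlonglongrightarrow> 0"
  shows "(\<lambda>k. X k i) \<longlonglongrightarrow> u i"
proof -
  have "(\<lambda>k. X k i - u i) \<longlonglongrightarrow> 0"
    by (rule Lim_null_comparison[OF _ assms(2)]) (use coord_le[OF assms(1)] in \<open>auto intro: always_eventually\<close>)
  thus ?thesis by (simp add: LIM_zero_iff)
qed

lemma As_l2s: "As u \<Longrightarrow> l2s u" using A_l2(1)[OF lam] .

lemma closed_part: "closed_form pos (hs pos (real m)) (\<lambda>u v. pair (Dpow m u) v + pair (mult V u) v)"
  unfolding closed_form_def
proof (intro allI impI, elim conjE)
  fix X :: "nat \<Rightarrow> int \<Rightarrow> complex" and u :: "int \<Rightarrow> complex"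
  assume XD: "\<forall>n. X n \<in> hs pos (real m)" and uL: "u \<in> hs pos 0"
    and conv0: "(\<lambda>n. l2norm (\<lambda>i. X n i - u i)) \<longlonglongrightarrow> 0"
    and cT: "\<forall>\<epsilon>>0. \<exists>N. \<forall>n\<ge>N. \<forall>k\<ge>N. cmod (tq (\<lambda>i. X n i - X k i)) < \<epsilon>"
  have AX: "As (X n)" for n using XD hs_m_iff[OF lam] by blast
  have pu: "parity_ok pos u" and lu: "l2s u" using uL hs0_iff by auto
  have lXu: "l2s (\<lambda>i. X n i - u i)" for n by (rule l2s_diff[OF As_l2s[OF AX] lu])
  have conv: "(\<lambda>n. nrm (\<lambda>i. X n i - u i)) \<longlonglongrightarrow> 0" using conv0 by (simp add: l2norm_nrm)
  have Xi: "(\<lambda>k. X k i) \<longlonglongrightarrow> u i" for i by (rule coord_conv[OF lXu conv])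
  have AXX: "As (\<lambda>i. X n i - X k i)" for n k by (rule As_diff(1)[OF lam0 AX AX])
  have KC: "\<exists>N. \<forall>n\<ge>N. As (\<lambda>i. X n i - u i) \<and> An (\<lambda>i. X n i - u i) \<le> e" if e: "0 < e" for e
  proof -
    define r where "r = e / (64 * lam)"
    have r0: "0 < r" using e lam by (simp add: r_def)
    obtain N1 where N1: "\<And>n. n \<ge> N1 \<Longrightarrow> nrm (\<lambda>i. X n i - u i) < sqrt r"
      using conv r0 unfolding LIMSEQ_def by (metis dist_real_def diff_zero real_sqrt_gt_zero nrm_nonneg abs_of_nonneg)
    obtain N2 where N2: "\<And>n k. n \<ge> N2 \<Longrightarrow> k \<ge> N2 \<Longrightarrow> cmod (tq (\<lambda>i. X n i - X k i)) < e / 4"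
      using cT e by (meson zero_less_divide_iff zero_less_numeral)
    define N where "N = max N1 N2"
    have An_nk: "An (\<lambda>i. X n i - X k i) \<le> e" if n: "n \<ge> N" and k: "k \<ge> N" for n k
    proof -
      have "nrm (\<lambda>i. X n i - X k i) \<le> nrm (\<lambda>i. X n i - u i) + nrm (\<lambda>i. u i - X k i)"
        by (rule nrm_tri(2)[OF lXu l2s_diff[OF lu As_l2s[OF AX]]])
      also have "\<dots> < 2 * sqrt r" using N1[of n] N1[of k] n k nrm_sym[of u "X k"] by (simp add: N_def)
      finally have a: "nrm (\<lambda>i. X n i - X k i) < 2 * sqrt r" .
      have "(nrm (\<lambda>i. X n i - X k i))^2 \<le> (2 * sqrt r)^2"
        using a by (intro power_mono) (auto simp: nrm_nonneg less_imp_le)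
      hence N2': "(\<Sum>\<^sub>\<infinity>i. (cmod (X n i - X k i))^2) \<le> 4 * r"
        using r0 infsum_sq_nonneg[of "\<lambda>i. cmod (X n i - X k i)"] by (simp add: nrm_def power_mult_distrib)
      have "3/4 * An (\<lambda>i. X n i - X k i) \<le> cmod (tq (\<lambda>i. X n i - X k i)) + lam * (\<Sum>\<^sub>\<infinity>i. (cmod (X n i - X k i))^2)"
        by (rule tq_bounds(2)[OF AXX])
      also have "\<dots> \<le> e / 4 + lam * (4 * r)"
        using N2[of n k] n k lam0 N2' by (intro add_mono mult_left_mono) (auto simp: N_def)
      also have "\<dots> = e / 4 + e / 16" using lam by (simp add: r_def)
      finally show ?thesis using e by simp
    qed
    show ?thesis
    proof (intro exI[of _ N] allI impI)
      fix n assume n: "n \<ge> N"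
      have fin: "sum (Aterm m lam (\<lambda>i. X n i - u i)) F \<le> e" if F: "finite F" for F
      proof -
        have lim: "(\<lambda>k. sum (Aterm m lam (\<lambda>i. X n i - X k i)) F) \<longlonglongrightarrow> sum (Aterm m lam (\<lambda>i. X n i - u i)) F"
          unfolding Aterm_def by (intro tendsto_sum tendsto_mult tendsto_const tendsto_power tendsto_norm tendsto_diff Xi)
        have ev: "\<forall>\<^sub>F k in sequentially. sum (Aterm m lam (\<lambda>i. X n i - X k i)) F \<le> e"
        proof (rule eventually_sequentiallyI[of N])
          fix k assume k: "N \<le> k"
          have "sum (Aterm m lam (\<lambda>i. X n i - X k i)) F \<le> An (\<lambda>i. X n i - X k i)"
            unfolding Anorm_def by (rule fsum_le[OF AXX Aterm_nonneg[OF lam0] F])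
          also have "\<dots> \<le> e" by (rule An_nk[OF n k])
          finally show "sum (Aterm m lam (\<lambda>i. X n i - X k i)) F \<le> e" .
        qed
        show ?thesis by (rule tendsto_le[OF _ tendsto_const lim ev]) simp
      qed
      show "As (\<lambda>i. X n i - u i) \<and> An (\<lambda>i. X n i - u i) \<le> e"
        using bsum[of "Aterm m lam (\<lambda>i. X n i - u i)" e, OF Aterm_nonneg[OF lam0] fin]
        by (simp add: Anorm_def)
    qed
  qed
  obtain N0 where N0: "As (\<lambda>i. X N0 i - u i)" using KC[of 1] by auto
  have "As (\<lambda>i. X N0 i - (X N0 i - u i))" by (rule As_diff(1)[OF lam0 AX N0])
  hence Au: "As u" by simp
  have uin: "u \<in> hs pos (real m)" using hs_m_iff[OF lam] pu Au by blast
  have "(\<lambda>n. tq (\<lambda>i. X n i - u i)) \<longlonglongrightarrow> 0"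
  proof (rule LIMSEQ_I)
    fix r :: real assume r: "0 < r"
    obtain N where N: "\<And>n. n \<ge> N \<Longrightarrow> As (\<lambda>i. X n i - u i) \<and> An (\<lambda>i. X n i - u i) \<le> r / 3"
      using KC[of "r/3"] r by auto
    show "\<exists>N. \<forall>n\<ge>N. norm (tq (\<lambda>i. X n i - u i) - 0) < r"
    proof (intro exI[of _ N] allI impI)
      fix n assume n: "n \<ge> N"
      have "cmod (tq (\<lambda>i. X n i - u i)) \<le> 9/4 * An (\<lambda>i. X n i - u i)"
        by (rule tq_bounds(1)) (use N[OF n] in blast)
      also have "\<dots> \<le> 9/4 * (r / 3)" using N[OF n] by simp
      finally show "norm (tq (\<lambda>i. X n i - u i) - 0) < r" using r by simp
    qed
  qed
  with uin show "u \<in> hs pos (real m) \<and> (\<lambda>n. tq (\<lambda>i. X n i - u i)) \<longlonglongrightarrow> 0" by blast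
qed

end


context frm begin

lemma V_odd: "odd k \<Longrightarrow> V k = 0"
  using Vpar unfolding parity_ok_def by auto

lemma mult_term_zero:
  assumes pu: "parity_ok pos u" and n: "\<not> (even n \<longleftrightarrow> pos)"
  shows "V (n - j) * u j = 0"
proof (cases "u j = 0")
  case False
  hence "even j \<longleftrightarrow> pos" using pu by (auto simp: parity_ok_def)
  hence "odd (n - j)" using n by auto
  thus ?thesis by (simp add: V_odd)
qed simp

lemma Sexpr_wrong:
  assumes pu: "parity_ok pos u" and n: "\<not> (even n \<longleftrightarrow> pos)"
  shows "Sexpr m V u n = 0"
proof -
  have "u n = 0" using pu n by (auto simp: parity_ok_def)
  moreover have "mult V u n = 0" unfolding mult_def by (rule infsum_0) (rule mult_term_zero[OF pu n])
  ultimately show ?thesis by (simp add: Sexpr_def Dpow_def)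
qed

definition delta :: "int \<Rightarrow> int \<Rightarrow> complex" where
  "delta n i = (if i = n then 1 else 0)"

lemma pair_delta: "pair f (delta n) = f n"
proof -
  have "pair f (delta n) = infsum (\<lambda>i. f i * cnj (delta n i)) {n}"
    unfolding pair_def by (rule infsum_cong_neutral) (auto simp: delta_def)
  thus ?thesis by (simp add: delta_def)
qed

lemma As_finite_support:
  assumes "finite F" "\<And>i. i \<notin> F \<Longrightarrow> w i = 0"
  shows "As w"
proof (rule bsum(1)[of _ "sum (Aterm m lam w) F"])
  fix T :: "int set" assume T: "finite T"
  have "sum (Aterm m lam w) T = sum (Aterm m lam w) (T \<inter> F)"
    by (rule sum.mono_neutral_right) (use T assms in \<open>auto simp: Aterm_def\<close>)
  also have "\<dots> \<le> sum (Aterm m lam w) F"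
    by (rule sum_mono2) (use assms Aterm_nonneg[OF lam0] in auto)
  finally show "sum (Aterm m lam w) T \<le> sum (Aterm m lam w) F" .
qed (simp add: Aterm_nonneg lam0)

lemma delta_in:
  assumes "even n \<longleftrightarrow> pos"
  shows "delta n \<in> hs pos (real m)"
proof -
  have "parity_ok pos (delta n)" using assms by (auto simp: parity_ok_def delta_def)
  moreover have "As (delta n)" by (rule As_finite_support[of "{n}"]) (auto simp: delta_def)
  ultimately show ?thesis using hs_m_iff[OF lam] by blast
qed

lemma hs_As: "u \<in> hs pos (real m) \<Longrightarrow> As u" using hs_m_iff[OF lam] by blast
lemma hs_par: "u \<in> hs pos s \<Longrightarrow> parity_ok pos u" by (simp add: hs_def)

lemma D_sub_L2: "hs pos (real m) \<subseteq> hs pos 0"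
  using hs_As hs_par As_l2s hs0_iff by blast

lemma assoc_part:
  "assoc_op pos (hs pos (real m)) (\<lambda>u v. pair (Dpow m u) v + pair (mult V u) v)
     {u \<in> hs pos (real m). Sexpr m V u \<in> hs pos 0} (\<lambda>u. Sexpr m V u)"
  unfolding assoc_op_def
proof (intro conjI ballI)
  show "{u \<in> hs pos (real m). Sexpr m V u \<in> hs pos 0} =
    {u \<in> hs pos (real m). \<exists>w\<in>hs pos 0. \<forall>v\<in>hs pos (real m). pair (Dpow m u) v + pair (mult V u) v = pair w v}"
  proof
    show "{u \<in> hs pos (real m). Sexpr m V u \<in> hs pos 0} \<subseteq>
      {u \<in> hs pos (real m). \<exists>w\<in>hs pos 0. \<forall>v\<in>hs pos (real m). pair (Dpow m u) v + pair (mult V u) v = pair w v}"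
    proof
      fix u assume "u \<in> {u \<in> hs pos (real m). Sexpr m V u \<in> hs pos 0}"
      hence uD: "u \<in> hs pos (real m)" and SL: "Sexpr m V u \<in> hs pos 0" by auto
      have "\<forall>v\<in>hs pos (real m). pair (Dpow m u) v + pair (mult V u) v = pair (Sexpr m V u) v"
        using pair_Sexpr[OF hs_As[OF uD] hs_As] by auto
      thus "u \<in> {u \<in> hs pos (real m). \<exists>w\<in>hs pos 0. \<forall>v\<in>hs pos (real m). pair (Dpow m u) v + pair (mult V u) v = pair w v}"
        using uD SL by blast
    qed
    show "{u \<in> hs pos (real m). \<exists>w\<in>hs pos 0. \<forall>v\<in>hs pos (real m). pair (Dpow m u) v + pair (mult V u) v = pair w v}
      \<subseteq> {u \<in> hs pos (real m). Sexpr m V u \<in> hs pos 0}"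
    proof
      fix u assume "u \<in> {u \<in> hs pos (real m). \<exists>w\<in>hs pos 0. \<forall>v\<in>hs pos (real m). pair (Dpow m u) v + pair (mult V u) v = pair w v}"
      then obtain w where uD: "u \<in> hs pos (real m)" and wL: "w \<in> hs pos 0"
        and H: "\<forall>v\<in>hs pos (real m). pair (Dpow m u) v + pair (mult V u) v = pair w v" by auto
      have "Sexpr m V u = w"
      proof
        fix n show "Sexpr m V u n = w n"
        proof (cases "even n \<longleftrightarrow> pos")
          case True
          have "pair (Sexpr m V u) (delta n) = pair w (delta n)"
            using H delta_in[OF True] pair_Sexpr[OF hs_As[OF uD] hs_As[OF delta_in[OF True]]] by simp
          thus ?thesis by (simp add: pair_delta)
        next
          case False
          have "w n = 0" using hs_par[OF wL] False by (auto simp: parity_ok_def)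
          thus ?thesis using Sexpr_wrong[OF hs_par[OF uD] False] by simp
        qed
      qed
      thus "u \<in> {u \<in> hs pos (real m). Sexpr m V u \<in> hs pos 0}" using uD wL by simp
    qed
  qed
next
  fix u assume "u \<in> {u \<in> hs pos (real m). Sexpr m V u \<in> hs pos 0}"
  thus "Sexpr m V u \<in> hs pos 0" by auto
next
  fix u v assume "u \<in> {u \<in> hs pos (real m). Sexpr m V u \<in> hs pos 0}" and vD: "v \<in> hs pos (real m)"
  hence uD: "u \<in> hs pos (real m)" by auto
  show "pair (Dpow m u) v + pair (mult V u) v = pair (Sexpr m V u) v"
    using pair_Sexpr[OF hs_As[OF uD] hs_As[OF vD]] by auto
qed

lemma dense_part: "densely_defined pos (hs pos (real m))"
  unfolding densely_defined_def
proof (intro conjI ballI allI impI)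
  show "hs pos (real m) \<subseteq> hs pos 0" by (rule D_sub_L2)
  fix f :: "int \<Rightarrow> complex" and \<epsilon> :: real
  assume fL: "f \<in> hs pos 0" and e: "0 < \<epsilon>"
  define g where "g i = (cmod (f i))^2" for i
  have sg: "g summable_on UNIV" unfolding g_def using fL hs0_iff by blast
  have g0: "0 \<le> g i" for i by (simp add: g_def)
  have e2: "0 < \<epsilon>^2 / 2" using e by simp
  obtain F where F: "finite F" "dist (sum g F) (infsum g UNIV) \<le> \<epsilon>^2 / 2"
    using infsum_finite_approximation[OF sg e2] by auto
  define u where "u i = (if i \<in> F then f i else 0)" for i
  have uD: "u \<in> hs pos (real m)"
  proof -
    have "parity_ok pos u" using hs_par[OF fL] by (auto simp: parity_ok_def u_def)
    moreover have "As u" by (rule As_finite_support[OF F(1)]) (simp add: u_def)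
    ultimately show ?thesis using hs_m_iff[OF lam] by blast
  qed
  have fin: "(\<Sum>i\<in>T. (cmod (f i - u i))^2) \<le> (\<epsilon> / sqrt 2)^2" if T: "finite T" for T
  proof -
    have "(\<Sum>i\<in>T. (cmod (f i - u i))^2) = (\<Sum>i\<in>T - F. g i)"
      by (rule sum.mono_neutral_cong_right) (use T in \<open>auto simp: u_def g_def\<close>)
    also have "\<dots> \<le> infsum g UNIV - sum g F"
    proof -
      have "(\<Sum>k\<in>T - F. g k) + sum g F = sum g ((T - F) \<union> F)"
        by (rule sum.union_disjoint[symmetric]) (use T F in auto)
      also have "\<dots> \<le> infsum g UNIV" by (rule fsum_le[OF sg g0]) (use T F in auto)
      finally show ?thesis by simp
    qed
    also have "\<dots> \<le> \<epsilon>^2 / 2"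
    proof -
      have a: "\<bar>sum g F - infsum g UNIV\<bar> \<le> \<epsilon>^2 / 2" using F(2) by (simp add: dist_real_def)
      have b: "infsum g UNIV - sum g F \<le> \<bar>sum g F - infsum g UNIV\<bar>" by (metis abs_ge_minus_self minus_diff_eq)
      show ?thesis using a b by linarith
    qed
    also have "\<dots> = (\<epsilon> / sqrt 2)^2" by (simp add: power_divide)
    finally show ?thesis .
  qed
  have "0 \<le> \<epsilon> / sqrt 2" using e by simp
  hence "nrm (\<lambda>i. f i - u i) \<le> \<epsilon> / sqrt 2" using nrm_bound(2)[of "\<lambda>i. f i - u i" "\<epsilon> / sqrt 2"] fin by blast
  also have "\<dots> < \<epsilon>" using e by (simp add: divide_less_eq)
  finally show "\<exists>u\<in>hs pos (real m). l2norm (\<lambda>n. f n - u n) < \<epsilon>" using uD by (auto simp: l2norm_nrm)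
qed

lemma sect_part: "sectorial_form pos (hs pos (real m)) (\<lambda>u v. pair (Dpow m u) v + pair (mult V u) v)"
proof -
  have H: "\<forall>u\<in>hs pos (real m). l2norm u = 1 \<longrightarrow> tq u \<in> sector (- lam) (pi / 4)"
  proof (intro ballI impI)
    fix u assume uD: "u \<in> hs pos (real m)" and n1: "l2norm u = 1"
    have "(\<Sum>\<^sub>\<infinity>n. (cmod (u n))^2) = 1" using n1 unfolding l2norm_def by simp
    from form_sector[OF hs_As[OF uD] this] show "tq u \<in> sector (- lam) (pi / 4)" .
  qed
  show ?thesis unfolding sectorial_form_def using D_sub_L2 H
    by (intro conjI exI[of _ "- lam"] exI[of _ "pi/4"]) auto
qed

end


locale res = frm +
  fixes z :: complex
  assumes hz: "\<And>n. pw m n + lam \<le> 2 * cmod (complex_of_real (pw m n) - z)"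
begin

definition bb :: "int \<Rightarrow> complex" where "bb n = complex_of_real (pw m n) - z"
definition R :: "int \<Rightarrow> real" where "R n = 1 / sqrt (cmod (bb n))"
definition sg :: "int \<Rightarrow> complex" where "sg n = bb n / complex_of_real (cmod (bb n))"
definition Kop :: "(int \<Rightarrow> complex) \<Rightarrow> int \<Rightarrow> complex" where
  "Kop y = (\<lambda>n. complex_of_real (R n) * mult V (\<lambda>j. complex_of_real (R j) * y j) n)"
definition Top :: "(int \<Rightarrow> complex) \<Rightarrow> (int \<Rightarrow> complex) \<Rightarrow> int \<Rightarrow> complex" where
  "Top f y = (\<lambda>n. cnj (sg n) * (complex_of_real (R n) * f n - Kop y n))"

lemma hzb: "pw m n + lam \<le> 2 * cmod (bb n)" using hz by (simp add: bb_def)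

lemma bpos: "0 < cmod (bb n)"
  using hzb[of n] pw_nonneg[of m n] lam by linarith

lemma R_pos: "0 < R n" using bpos by (simp add: R_def)

lemma R_sq: "(R n)^2 = 1 / cmod (bb n)"
  using bpos[of n] by (simp add: R_def power_divide)

lemma aR: "(pw m n + lam) * (R n)^2 \<le> 2"
  using hzb[of n] bpos[of n] by (simp add: R_sq field_simps)

lemma R_le: "R n \<le> sqrt 2"
proof -
  have "(R n)^2 \<le> 2"
  proof -
    have "(pw m n + lam) * (R n)^2 \<le> 2" by (rule aR)
    moreover have "1 * (R n)^2 \<le> (pw m n + lam) * (R n)^2"
      using pw_nonneg[of m n] lam by (intro mult_right_mono) auto
    ultimately show ?thesis by simp
  qed
  thus ?thesis using R_pos[of n] by (metis real_le_rsqrt less_imp_le)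
qed

lemma sg_norm: "cmod (sg n) = 1"
  using bpos[of n] by (simp add: sg_def norm_divide)

lemma bb_eq: "bb n = sg n * complex_of_real (sqrt (cmod (bb n))) * complex_of_real (sqrt (cmod (bb n)))"
proof -
  have "complex_of_real (sqrt (cmod (bb n))) * complex_of_real (sqrt (cmod (bb n))) = complex_of_real (cmod (bb n))"
    by (simp flip: of_real_mult)
  thus ?thesis using bpos[of n] by (simp add: sg_def mult.assoc)
qed

lemma Rs: "complex_of_real (sqrt (cmod (bb n))) * complex_of_real (R n) = 1"
  using bpos[of n] by (simp add: R_def flip: of_real_mult)

lemma sg_cnj: "cnj (sg n) * sg n = 1"
  using sg_norm[of n] by (metis complex_norm_square mult.commute of_real_1 power_one)

lemma As_R:
  assumes "l2s y"
  shows "As (\<lambda>j. complex_of_real (R j) * y j)" "An (\<lambda>j. complex_of_real (R j) * y j) \<le> 2 * (\<Sum>\<^sub>\<infinity>n. (cmod (y n))^2)"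
proof -
  have le: "Aterm m lam (\<lambda>j. complex_of_real (R j) * y j) n \<le> 2 * (cmod (y n))^2" for n
  proof -
    have "Aterm m lam (\<lambda>j. complex_of_real (R j) * y j) n = ((pw m n + lam) * (R n)^2) * (cmod (y n))^2"
      using R_pos[of n] by (simp add: Aterm_def norm_mult power_mult_distrib)
    also have "\<dots> \<le> 2 * (cmod (y n))^2" by (rule mult_right_mono[OF aR]) simp
    finally show ?thesis .
  qed
  have s: "(\<lambda>n. 2 * (cmod (y n))^2) summable_on UNIV" by (rule summable_on_cmult_right[OF assms])
  show a: "As (\<lambda>j. complex_of_real (R j) * y j)"
    by (rule summable_on_comparison_test[OF s le]) (simp add: Aterm_nonneg lam0)
  have "An (\<lambda>j. complex_of_real (R j) * y j) \<le> (\<Sum>\<^sub>\<infinity>n. 2 * (cmod (y n))^2)"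
    unfolding Anorm_def by (rule infsum_mono[OF a s le])
  thus "An (\<lambda>j. complex_of_real (R j) * y j) \<le> 2 * (\<Sum>\<^sub>\<infinity>n. (cmod (y n))^2)"
    by (simp add: infsum_cmult_right')
qed

lemma K_bound:
  assumes ly: "l2s y"
  shows "l2s (Kop y)" "nrm (Kop y) \<le> nrm y / 2"
proof -
  define u where "u j = complex_of_real (R j) * y j" for j
  have Au: "As u" and Anu: "An u \<le> 2 * (\<Sum>\<^sub>\<infinity>n. (cmod (y n))^2)"
    using As_R[OF ly] by (simp_all add: u_def[abs_def])
  define M where "M n = mult V u n" for n
  define N2 where "N2 = (\<Sum>\<^sub>\<infinity>n. (cmod (y n))^2)"
  have N20: "0 \<le> N2" unfolding N2_def using infsum_sq_nonneg[of "\<lambda>n. cmod (y n)"] by simp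
  have ky: "(cmod (Kop y n))^2 = (R n)^2 * (cmod (M n))^2" for n
    using R_pos[of n] by (simp add: Kop_def M_def u_def[abs_def] norm_mult power_mult_distrib)
  have fin: "(\<Sum>n\<in>F. (cmod (Kop y n))^2) \<le> (nrm y / 2)^2" if F: "finite F" for F
  proof -
    define S where "S = (\<Sum>n\<in>F. (R n)^2 * (cmod (M n))^2)"
    have S0: "0 \<le> S" unfolding S_def by (simp add: sum_nonneg)
    define g where "g n = (if n \<in> F then complex_of_real ((R n)^2) * M n else 0)" for n
    have Ag: "As g" by (rule As_finite_support[OF F]) (simp add: g_def)
    have Ang: "An g \<le> 2 * S"
      unfolding Anorm_def
    proof (rule infsum_le_finite_sums[OF Ag])
      fix T :: "int set" assume T: "finite T"
      have "sum (Aterm m lam g) T = sum (Aterm m lam g) (T \<inter> F)"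
        by (rule sum.mono_neutral_right) (use T in \<open>auto simp: Aterm_def g_def\<close>)
      also have "\<dots> \<le> sum (\<lambda>n. 2 * ((R n)^2 * (cmod (M n))^2)) (T \<inter> F)"
      proof (rule sum_mono)
        fix n assume "n \<in> T \<inter> F"
        have c: "cmod (complex_of_real ((R n)^2)) = (R n)^2" by (simp only: norm_of_real) simp
        have "Aterm m lam g n = (pw m n + lam) * ((R n)^2 * cmod (M n))^2"
          using \<open>n \<in> T \<inter> F\<close> by (simp only: Aterm_def g_def norm_mult c IntD2 if_True)
        hence "Aterm m lam g n = ((pw m n + lam) * (R n)^2) * ((R n)^2 * (cmod (M n))^2)"
          by (simp add: power_mult_distrib algebra_simps power2_eq_square)
        also have "\<dots> \<le> 2 * ((R n)^2 * (cmod (M n))^2)" by (rule mult_right_mono[OF aR]) simp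
        finally show "Aterm m lam g n \<le> 2 * ((R n)^2 * (cmod (M n))^2)" .
      qed
      also have "\<dots> \<le> sum (\<lambda>n. 2 * ((R n)^2 * (cmod (M n))^2)) F"
        by (rule sum_mono2) (use F in auto)
      also have "\<dots> = 2 * S" by (simp add: S_def sum_distrib_left)
      finally show "sum (Aterm m lam g) T \<le> 2 * S" .
    qed
    have pg: "pair (mult V u) g = complex_of_real S"
    proof -
      have "pair (mult V u) g = infsum (\<lambda>n. mult V u n * cnj (g n)) F"
        unfolding pair_def by (rule infsum_cong_neutral) (auto simp: g_def)
      also have "\<dots> = sum (\<lambda>n. mult V u n * cnj (g n)) F" by (rule infsum_finite[OF F])
      also have "\<dots> = (\<Sum>n\<in>F. complex_of_real ((R n)^2 * (cmod (M n))^2))"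
      proof (rule sum.cong[OF refl])
        fix n assume "n \<in> F"
        have "mult V u n * cnj (g n) = complex_of_real ((R n)^2) * (M n * cnj (M n))"
          using \<open>n \<in> F\<close> by (simp add: g_def M_def)
        also have "\<dots> = complex_of_real ((R n)^2 * (cmod (M n))^2)"
          by (simp only: of_real_mult complex_norm_square)
        finally show "mult V u n * cnj (g n) = complex_of_real ((R n)^2 * (cmod (M n))^2)" .
      qed
      also have "\<dots> = complex_of_real S" by (simp add: S_def)
      finally show ?thesis .
    qed
    have "S \<le> 1/4 * sqrt (An u) * sqrt (An g)"
      using pairV(3)[OF Au Ag] pg S0 by simp
    also have "\<dots> \<le> 1/4 * sqrt (2 * N2) * sqrt (2 * S)"
      using Anu Ang An0[of u] An0[of g] unfolding N2_def
      by (intro mult_mono mult_left_mono real_sqrt_le_mono) auto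
    finally have "S \<le> 1/4 * sqrt (2 * N2) * sqrt (2 * S)" .
    hence "S^2 \<le> (1/4 * sqrt (2 * N2) * sqrt (2 * S))^2" using S0 by (intro power_mono) auto
    also have "\<dots> = 1/16 * (sqrt (2 * N2))^2 * (sqrt (2 * S))^2" by (simp only: power_mult_distrib) (simp add: power2_eq_square)
    also have "\<dots> = 1/4 * N2 * S" using N20 S0 by simp
    finally have "S * S \<le> (1/4 * N2) * S" by (simp add: power2_eq_square)
    hence "S \<le> 1/4 * N2" using S0 N20 by (cases "S = 0") (auto simp: mult_le_cancel_right)
    also have "\<dots> = (nrm y / 2)^2" using N20 by (simp add: nrm_def N2_def power_divide)
    finally show ?thesis by (simp add: ky S_def)
  qed
  have B: "0 \<le> nrm y / 2" by (simp add: nrm_nonneg)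
  show "l2s (Kop y)" using nrm_bound(1)[of "Kop y" "nrm y / 2"] fin B by blast
  show "nrm (Kop y) \<le> nrm y / 2" using nrm_bound(2)[of "Kop y" "nrm y / 2"] fin B by blast
qed

lemma K_diff:
  assumes "l2s y1" "l2s y2"
  shows "Kop (\<lambda>n. y1 n - y2 n) n = Kop y1 n - Kop y2 n"
proof -
  have e: "(\<lambda>j. complex_of_real (R j) * (y1 j - y2 j)) = (\<lambda>j. complex_of_real (R j) * y1 j - complex_of_real (R j) * y2 j)"
    by (simp add: algebra_simps)
  have h: "mult V (\<lambda>j. complex_of_real (R j) * y1 j - complex_of_real (R j) * y2 j) n
      = mult V (\<lambda>j. complex_of_real (R j) * y1 j) n - mult V (\<lambda>j. complex_of_real (R j) * y2 j) n"
    by (rule mult_diff[OF As_R(1)[OF assms(1)] As_R(1)[OF assms(2)]])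
  show ?thesis unfolding Kop_def by (simp only: h right_diff_distrib)
qed

end


context res begin

lemma cR_le: "cmod (cnj (sg n) * complex_of_real (R n)) \<le> sqrt 2"
  using R_le[of n] R_pos[of n] by (simp add: norm_mult sg_norm)

lemma T_split: "Top f y n = (cnj (sg n) * complex_of_real (R n)) * f n + (- cnj (sg n)) * Kop y n"
  by (simp add: Top_def algebra_simps)

lemma T_l2:
  assumes lf: "l2s f" and ly: "l2s y"
  shows "l2s (Top f y)" "nrm (Top f y) \<le> sqrt 2 * nrm f + nrm y / 2"
proof -
  let ?a = "\<lambda>n. (cnj (sg n) * complex_of_real (R n)) * f n"
  let ?b = "\<lambda>n. (- cnj (sg n)) * Kop y n"
  have la: "l2s ?a" and na: "nrm ?a \<le> sqrt 2 * nrm f" using nrm_mult[OF lf cR_le] by auto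
  have lK: "l2s (Kop y)" and nK: "nrm (Kop y) \<le> nrm y / 2" using K_bound[OF ly] by auto
  have lb: "l2s ?b" and nb: "nrm ?b \<le> 1 * nrm (Kop y)" using nrm_mult[OF lK, of "\<lambda>n. - cnj (sg n)" 1] by (auto simp: sg_norm)
  have e: "Top f y = (\<lambda>n. ?a n + ?b n)" by (rule ext) (rule T_split)
  show "l2s (Top f y)" unfolding e by (rule nrm_add(1)[OF la lb])
  have "nrm (Top f y) \<le> nrm ?a + nrm ?b" unfolding e by (rule nrm_add(2)[OF la lb])
  thus "nrm (Top f y) \<le> sqrt 2 * nrm f + nrm y / 2" using na nb nK by linarith
qed

lemma T_contr:
  assumes ly1: "l2s y1" and ly2: "l2s y2"
  shows "nrm (\<lambda>n. Top f y1 n - Top f y2 n) \<le> 1/2 * nrm (\<lambda>n. y1 n - y2 n)"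
proof -
  have ld: "l2s (\<lambda>n. y1 n - y2 n)" by (rule l2s_diff[OF ly1 ly2])
  have lK: "l2s (Kop (\<lambda>n. y1 n - y2 n))" and nK: "nrm (Kop (\<lambda>n. y1 n - y2 n)) \<le> nrm (\<lambda>n. y1 n - y2 n) / 2"
    using K_bound[OF ld] by auto
  have e: "(\<lambda>n. Top f y1 n - Top f y2 n) = (\<lambda>n. (- cnj (sg n)) * Kop (\<lambda>n. y1 n - y2 n) n)"
    by (rule ext) (simp add: Top_def K_diff[OF ly1 ly2] algebra_simps)
  have "nrm (\<lambda>n. (- cnj (sg n)) * Kop (\<lambda>n. y1 n - y2 n) n) \<le> 1 * nrm (Kop (\<lambda>n. y1 n - y2 n))"
    using nrm_mult[OF lK, of "\<lambda>n. - cnj (sg n)" 1] by (auto simp: sg_norm)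
  thus ?thesis unfolding e using nK by simp
qed

lemma solve:
  assumes lf: "l2s f"
  shows "\<exists>u. As u \<and> (\<forall>n. Sexpr m V u n - z * u n = f n)"
proof -
  obtain y where ly: "l2s y" and fx: "Top f y = y"
    using fixpt[of "Top f"] T_l2(1)[OF lf] T_contr by blast
  define u where "u j = complex_of_real (R j) * y j" for j
  have Au: "As u" using As_R(1)[OF ly] by (simp add: u_def[abs_def])
  have "Sexpr m V u n - z * u n = f n" for n
  proof -
    let ?s = "complex_of_real (sqrt (cmod (bb n)))" and ?r = "complex_of_real (R n)"
    let ?M = "mult V u n"
    have K: "Kop y n = ?r * ?M" by (simp add: Kop_def u_def[abs_def])
    have "cnj (sg n) * (?r * f n - Kop y n) = y n" using fun_cong[OF fx, of n] by (simp add: Top_def)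
    hence "sg n * (cnj (sg n) * (?r * f n - Kop y n)) = sg n * y n" by simp
    moreover have "sg n * (cnj (sg n) * (?r * f n - Kop y n)) = (cnj (sg n) * sg n) * (?r * f n - Kop y n)"
      by (simp only: mult.assoc mult.left_commute)
    ultimately have "?r * f n - Kop y n = sg n * y n" by (simp add: sg_cnj)
    hence h1: "?r * f n - ?r * ?M = sg n * y n" using K by simp
    have h2: "?s * ?r = 1" by (rule Rs)
    have h3: "bb n = sg n * ?s * ?s" by (rule bb_eq)
    have "Sexpr m V u n - z * u n = bb n * (?r * y n) + ?M"
      by (simp add: Sexpr_def Dpow_eq bb_def u_def algebra_simps)
    also have "\<dots> = f n"
    proof -
      have "bb n * (?r * y n) + ?M = ?s * (sg n * y n) * (?s * ?r) + ?M" using h3 by (simp add: algebra_simps)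
      also have "\<dots> = ?s * (?r * f n - ?r * ?M) + ?M" using h1 h2 by simp
      also have "\<dots> = (?s * ?r) * f n - (?s * ?r) * ?M + ?M" by (simp add: algebra_simps)
      also have "\<dots> = f n" using h2 by simp
      finally show ?thesis .
    qed
    finally show ?thesis .
  qed
  with Au show ?thesis by blast
qed

lemma bound:
  assumes Au: "As u" and lf: "l2s (\<lambda>n. Sexpr m V u n - z * u n)"
  shows "nrm u \<le> 4 * nrm (\<lambda>n. Sexpr m V u n - z * u n)"
proof -
  define f where "f n = Sexpr m V u n - z * u n" for n
  have lf': "l2s f" using lf by (simp add: f_def[abs_def])
  define y where "y n = complex_of_real (sqrt (cmod (bb n))) * u n" for n
  have ly: "l2s y"
  proof -
    have le: "(cmod (y n))^2 \<le> (1 + cmod z) * Aterm m lam u n" for n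
    proof -
      have "(cmod (y n))^2 = cmod (bb n) * (cmod (u n))^2"
        using bpos[of n] by (simp add: y_def norm_mult power_mult_distrib)
      also have "cmod (bb n) \<le> pw m n + cmod z"
        unfolding bb_def using norm_triangle_ineq4[of "complex_of_real (pw m n)" z] pw_nonneg[of m n] by simp
      also have "pw m n + cmod z \<le> (1 + cmod z) * (pw m n + lam)"
      proof -
        have e: "(1 + cmod z) * (pw m n + lam) = pw m n + lam + cmod z * pw m n + cmod z * lam"
          by (simp add: algebra_simps)
        have "cmod z * 1 \<le> cmod z * lam" using lam by (intro mult_left_mono) auto
        moreover have "0 \<le> cmod z * pw m n" using pw_nonneg[of m n] by simp
        ultimately show ?thesis using e lam by linarith
      qed
      finally show ?thesis by (simp add: Aterm_def mult_right_mono mult.assoc)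
    qed
    show ?thesis
      by (rule summable_on_comparison_test[OF summable_on_cmult_right[OF Au, of "1 + cmod z"]]) (use le in auto)
  qed
  have Ry: "(\<lambda>j. complex_of_real (R j) * y j) = u"
  proof
    fix j
    have "complex_of_real (R j) * y j = (complex_of_real (sqrt (cmod (bb j))) * complex_of_real (R j)) * u j"
      by (simp add: y_def algebra_simps)
    thus "complex_of_real (R j) * y j = u j" by (simp add: Rs)
  qed
  have fx: "Top f y = y"
  proof
    fix n
    let ?s = "complex_of_real (sqrt (cmod (bb n)))" and ?r = "complex_of_real (R n)"
    let ?M = "mult V u n"
    have K: "Kop y n = ?r * ?M" by (simp add: Kop_def Ry)
    have fe: "f n = bb n * u n + ?M"
      by (simp add: f_def Sexpr_def Dpow_eq bb_def algebra_simps)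
    have h2: "?s * ?r = 1" by (rule Rs)
    have h3: "bb n = sg n * ?s * ?s" by (rule bb_eq)
    have "?r * f n - Kop y n = ?r * (bb n * u n)" using fe K by (simp add: algebra_simps)
    also have "\<dots> = sg n * (?s * ?r) * (?s * u n)" using h3 by (simp add: algebra_simps)
    also have "\<dots> = sg n * y n" using h2 by (simp add: y_def)
    finally have "?r * f n - Kop y n = sg n * y n" .
    hence "Top f y n = (cnj (sg n) * sg n) * y n" by (simp add: Top_def mult.assoc)
    thus "Top f y n = y n" by (simp add: sg_cnj)
  qed
  have "nrm y \<le> sqrt 2 * nrm f + nrm y / 2" using T_l2(2)[OF lf' ly] fx by simp
  hence ny: "nrm y \<le> 2 * sqrt 2 * nrm f" by simp
  have "nrm u \<le> sqrt 2 * nrm y"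
  proof -
    have "nrm (\<lambda>j. complex_of_real (R j) * y j) \<le> sqrt 2 * nrm y"
      by (rule nrm_mult(2)[OF ly]) (use R_le R_pos in \<open>simp add: less_imp_le\<close>)
    thus ?thesis by (simp add: Ry)
  qed
  also have "\<dots> \<le> sqrt 2 * (2 * sqrt 2 * nrm f)" using ny by (intro mult_left_mono) auto
  also have "\<dots> = 4 * nrm f" by simp
  finally show ?thesis by (simp add: f_def[abs_def])
qed

end


context frm begin

lemma Sexpr_diff:
  assumes "As u1" "As u2"
  shows "Sexpr m V (\<lambda>n. u1 n - u2 n) n = Sexpr m V u1 n - Sexpr m V u2 n"
  using mult_diff[OF assms, of n] by (simp add: Sexpr_def Dpow_eq algebra_simps)

lemma proj_solve:
  assumes Au: "As u" and eq: "\<And>n. Sexpr m V u n - z * u n = f n" and pf: "parity_ok pos f"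
  defines "up \<equiv> (\<lambda>n. if (even n \<longleftrightarrow> pos) then u n else 0)"
  shows "As up" "parity_ok pos up" "\<And>n. Sexpr m V up n - z * up n = f n"
proof -
  have e: "up = (\<lambda>n. (if (even n \<longleftrightarrow> pos) then 1 else 0) * u n)" by (rule ext) (simp add: up_def)
  show "As up" unfolding e by (rule As_bounded_mult(1)[OF lam0 Au, of _ 1]) simp
  show pu: "parity_ok pos up" by (auto simp: parity_ok_def up_def)
  fix n
  show "Sexpr m V up n - z * up n = f n"
  proof (cases "even n \<longleftrightarrow> pos")
    case True
    have "mult V up n = mult V u n"
      unfolding mult_def
    proof (rule infsum_cong)
      fix j
      show "V (n - j) * up j = V (n - j) * u j"
      proof (cases "even j \<longleftrightarrow> pos")
        case False
        hence "odd (n - j)" using True by auto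
        thus ?thesis by (simp add: V_odd)
      qed (simp add: up_def)
    qed
    moreover have "up n = u n" using True by (simp add: up_def)
    ultimately have "Sexpr m V up n - z * up n = Sexpr m V u n - z * u n" by (simp add: Sexpr_def Dpow_def)
    thus ?thesis using eq by simp
  next
    case False
    have "f n = 0" using pf False by (auto simp: parity_ok_def)
    moreover have "up n = 0" using False by (simp add: up_def)
    ultimately show ?thesis using Sexpr_wrong[OF pu False] by simp
  qed
qed

lemma msec_part: "m_sectorial pos {u \<in> hs pos (real m). Sexpr m V u \<in> hs pos 0} (\<lambda>u. Sexpr m V u)"
proof -
  let ?D = "{u \<in> hs pos (real m). Sexpr m V u \<in> hs pos 0}"
  have num: "\<forall>u\<in>?D. l2norm u = 1 \<longrightarrow> pair (Sexpr m V u) u \<in> sector (- lam) (pi / 4)"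
  proof (intro ballI impI)
    fix u assume uD: "u \<in> ?D" and n1: "l2norm u = 1"
    have Au: "As u" using uD hs_As by auto
    have "(\<Sum>\<^sub>\<infinity>n. (cmod (u n))^2) = 1" using n1 unfolding l2norm_def by simp
    from form_sector[OF Au this] show "pair (Sexpr m V u) u \<in> sector (- lam) (pi / 4)"
      using pair_Sexpr[OF Au Au] by simp
  qed
  have resv: "bij_betw (\<lambda>u. (\<lambda>n. Sexpr m V u n - z * u n)) ?D (hs pos 0) \<and>
      (\<exists>C. \<forall>u\<in>?D. l2norm u \<le> C * l2norm (\<lambda>n. Sexpr m V u n - z * u n))"
    if zs: "z \<notin> sector (- lam) (pi / 4)" for z
  proof -
    have hz: "pw m n + lam \<le> 2 * cmod (complex_of_real (pw m n) - z)" for n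
    proof -
      have "0 < pw m n + lam" using pw_nonneg[of m n] lam by linarith
      from dist_outside[OF this outside_sector[OF zs]]
      show ?thesis by (simp add: algebra_simps)
    qed
    interpret r: res m V lam z
      by (unfold_locales) (use m lam Vpar Eb hz in auto)
    let ?F = "\<lambda>u. (\<lambda>n. Sexpr m V u n - z * u n)"
    have Fin: "?F u \<in> hs pos 0 \<and> l2s (?F u)" if uD: "u \<in> ?D" for u
    proof -
      have Au: "As u" and pu: "parity_ok pos u" using uD hs_As hs_par by auto
      have SL: "Sexpr m V u \<in> hs pos 0" using uD by auto
      have lS: "l2s (Sexpr m V u)" and pS: "parity_ok pos (Sexpr m V u)" using SL hs0_iff by auto
      have lz: "l2s (\<lambda>n. z * u n)" using nrm_mult(1)[OF As_l2s[OF Au], of "\<lambda>_. z" "cmod z"] by simp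
      have l: "l2s (?F u)" by (rule l2s_diff[OF lS lz])
      have "parity_ok pos (?F u)" unfolding parity_ok_def
      proof (intro allI impI)
        fix n assume "Sexpr m V u n - z * u n \<noteq> 0"
        hence "Sexpr m V u n \<noteq> 0 \<or> u n \<noteq> 0" by auto
        thus "even n \<longleftrightarrow> pos" using pu pS unfolding parity_ok_def by blast
      qed
      with l show ?thesis using hs0_iff by blast
    qed
    have bnd: "l2norm u \<le> 4 * l2norm (?F u)" if uD: "u \<in> ?D" for u
      using r.bound[OF hs_As] uD Fin[OF uD] by (auto simp: l2norm_nrm)
    have inj: "inj_on ?F ?D"
    proof (rule inj_onI)
      fix u1 u2 assume u1: "u1 \<in> ?D" and u2: "u2 \<in> ?D" and eq: "?F u1 = ?F u2"
      have A1: "As u1" and A2: "As u2" using u1 u2 hs_As by auto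
      let ?w = "\<lambda>n. u1 n - u2 n"
      have Aw: "As ?w" by (rule As_diff(1)[OF lam0 A1 A2])
      have z0: "Sexpr m V ?w n - z * ?w n = 0" for n
      proof -
        have e1: "Sexpr m V u1 n - z * u1 n = Sexpr m V u2 n - z * u2 n" using fun_cong[OF eq, of n] by simp
        have "Sexpr m V ?w n - z * ?w n = (Sexpr m V u1 n - z * u1 n) - (Sexpr m V u2 n - z * u2 n)"
          by (simp only: Sexpr_diff[OF A1 A2]) (simp add: algebra_simps)
        thus ?thesis using e1 by simp
      qed
      have "nrm ?w \<le> 4 * nrm (\<lambda>n. Sexpr m V ?w n - z * ?w n)"
        by (rule r.bound[OF Aw]) (simp add: z0)
      hence "nrm ?w \<le> 0" by (simp add: z0 nrm_def)
      hence "?w n = 0" for n by (rule nrm_le_0[OF As_l2s[OF Aw]])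
      thus "u1 = u2" by (intro ext) (simp add: right_minus_eq)
    qed
    have surj: "hs pos 0 \<subseteq> ?F ` ?D"
    proof
      fix f assume fL: "f \<in> hs pos 0"
      have lf: "l2s f" and pf: "parity_ok pos f" using fL hs0_iff by auto
      obtain u where Au: "As u" and equ: "\<And>n. Sexpr m V u n - z * u n = f n" using r.solve[OF lf] by blast
      define up where "up = (\<lambda>n. if (even n \<longleftrightarrow> pos) then u n else 0)"
      have Aup: "As up" and pup: "parity_ok pos up" and eqp: "\<And>n. Sexpr m V up n - z * up n = f n"
        using proj_solve[OF Au equ pf] unfolding up_def by auto
      have upm: "up \<in> hs pos (real m)" using hs_m_iff[OF lam] Aup pup by blast
      have Se: "Sexpr m V up = (\<lambda>n. f n + z * up n)" using eqp by (intro ext) (simp add: algebra_simps)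
      have lz: "l2s (\<lambda>n. z * up n)" using nrm_mult(1)[OF As_l2s[OF Aup], of "\<lambda>_. z" "cmod z"] by simp
      have "l2s (Sexpr m V up)" unfolding Se by (rule nrm_add(1)[OF lf lz])
      moreover have "parity_ok pos (Sexpr m V up)" unfolding Se parity_ok_def
      proof (intro allI impI)
        fix n assume "f n + z * up n \<noteq> 0"
        hence "f n \<noteq> 0 \<or> up n \<noteq> 0" by auto
        thus "even n \<longleftrightarrow> pos" using pf pup unfolding parity_ok_def by blast
      qed
      ultimately have "Sexpr m V up \<in> hs pos 0" using hs0_iff by blast
      hence "up \<in> ?D" using upm by simp
      moreover have "?F up = f" using eqp by (intro ext) simp
      ultimately show "f \<in> ?F ` ?D" by force
    qed
    have "?F ` ?D = hs pos 0" using surj Fin by blast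
    with inj have "bij_betw ?F ?D (hs pos 0)" by (simp add: bij_betw_def)
    moreover have "\<exists>C. \<forall>u\<in>?D. l2norm u \<le> C * l2norm (?F u)" using bnd by blast
    ultimately show ?thesis by blast
  qed
  have d: "?D \<subseteq> hs pos 0" using D_sub_L2 by auto
  have s2: "\<forall>u\<in>?D. Sexpr m V u \<in> hs pos 0" by auto
  have a1: "0 \<le> pi / 4" and a2: "pi / 4 < pi / 2" by simp_all
  have r: "\<forall>z. z \<notin> sector (- lam) (pi / 4) \<longrightarrow>
       bij_betw (\<lambda>u. (\<lambda>n. Sexpr m V u n - z * u n)) ?D (hs pos 0) \<and>
       (\<exists>C. \<forall>u\<in>?D. l2norm u \<le> C * l2norm (\<lambda>n. Sexpr m V u n - z * u n))"
    using resv by blast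
  show ?thesis unfolding m_sectorial_def using d s2 a1 a2 num r by blast
qed

end

theorem theorem1:
  fixes m :: nat and V :: "int \<Rightarrow> complex" and pos :: bool
  assumes "m \<ge> 1"
    and "V \<in> hs True (- real m)"
  shows "densely_defined pos (hs pos (real m))
    \<and> sectorial_form pos (hs pos (real m)) (\<lambda>u v. pair (Dpow m u) v + pair (mult V u) v)
    \<and> closed_form pos (hs pos (real m)) (\<lambda>u v. pair (Dpow m u) v + pair (mult V u) v)
    \<and> assoc_op pos (hs pos (real m)) (\<lambda>u v. pair (Dpow m u) v + pair (mult V u) v)
        {u \<in> hs pos (real m). Sexpr m V u \<in> L2 pos} (\<lambda>u. Sexpr m V u)
    \<and> m_sectorial pos {u \<in> hs pos (real m). Sexpr m V u \<in> L2 pos}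
        (\<lambda>u. Sexpr m V u)"
proof -
  have Vs: "(\<lambda>k. wt k powr (2 * - real m) * (cmod (V k))^2) summable_on UNIV"
    and Vp: "parity_ok True V" using assms(2) by (auto simp: hs_def)
  obtain lam where lam: "1 \<le> lam" and Eb: "\<forall>u v G. Aterm m lam u summable_on UNIV \<longrightarrow> Aterm m lam v summable_on UNIV \<longrightarrow> finite G \<longrightarrow>
    (\<Sum>(n,j)\<in>G. cmod (V (n - j)) * cmod (u j) * cmod (v n)) \<le> 1/4 * sqrt (Anorm m lam u) * sqrt (Anorm m lam v)"
    using E[OF assms(1) Vs] by blast
  interpret frm m V lam
    by unfold_locales (use assms(1) lam Vp Eb in auto)
  show ?thesis using dense_part sect_part closed_part assoc_part msec_part by blast
qed


end
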